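(* Let $\ell_E$ be a symmetric sequence space which does not coincide with $c_0$ or $\ell_\infty$ (up to equivalent norms). Then there exists a reflexive symmetric sequence space $\ell_F$ such that $\ell_F\supset\ell_E$.
   Context: For a bounded sequence $x$, $\mu(x)$ denotes the decreasing rearrangement of $|x|$. A symmetric sequence space is a linear subspace $\ell_E\subset\ell_\infty$ with a complete norm such that $x\in\ell_\infty$, $y\in\ell_E$, $\mu(x)\le\mu(y)$ imply $x\in\ell_E$ and $\|x\|_{\ell_E}\le\|y\|_{\ell_E}$. *)

theory Defs
  imports Complex_Main
begin

type_synonym seq = "nat \<Rightarrow> real"

definition linf :: "seq set" where
  "linf = {x. \<exists>B. \<forall>k. \<bar>x k\<bar> \<le> B}"

definition c0 :: "seq set" where
  "c0 = {x. x \<longlonglongrightarrow> 0}"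

definition decr_rearr :: "seq \<Rightarrow> seq" where
  "decr_rearr x n = Inf {s. 0 \<le> s \<and> finite {k. \<bar>x k\<bar> > s} \<and> card {k. \<bar>x k\<bar> > s} \<le> n}"

definition lin_subspace :: "seq set \<Rightarrow> bool" where
  "lin_subspace L \<longleftrightarrow> (\<lambda>k. 0) \<in> L \<and> (\<forall>x\<in>L. \<forall>y\<in>L. (\<lambda>k. x k + y k) \<in> L)
     \<and> (\<forall>c::real. \<forall>x\<in>L. (\<lambda>k. c * x k) \<in> L)"

definition is_norm_on :: "seq set \<Rightarrow> (seq \<Rightarrow> real) \<Rightarrow> bool" where
  "is_norm_on L N \<longleftrightarrow>
     (\<forall>x\<in>L. 0 \<le> N x \<and> (N x = 0 \<longleftrightarrow> x = (\<lambda>k. 0)))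
   \<and> (\<forall>c. \<forall>x\<in>L. N (\<lambda>k. c * x k) = \<bar>c\<bar> * N x)
   \<and> (\<forall>x\<in>L. \<forall>y\<in>L. N (\<lambda>k. x k + y k) \<le> N x + N y)"

definition complete_wrt :: "seq set \<Rightarrow> (seq \<Rightarrow> real) \<Rightarrow> bool" where
  "complete_wrt L N \<longleftrightarrow>
     (\<forall>X. (\<forall>n. X n \<in> L) \<and> (\<forall>e>0. \<exists>M. \<forall>m\<ge>M. \<forall>n\<ge>M. N (\<lambda>k. X m k - X n k) < e)
        \<longrightarrow> (\<exists>x\<in>L. (\<lambda>n. N (\<lambda>k. X n k - x k)) \<longlonglongrightarrow> 0))"

definition symmetric_seq_space :: "seq set \<Rightarrow> (seq \<Rightarrow> real) \<Rightarrow> bool" where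
  "symmetric_seq_space L N \<longleftrightarrow>
     lin_subspace L \<and> L \<subseteq> linf \<and> is_norm_on L N \<and> complete_wrt L N
   \<and> (\<forall>x\<in>linf. \<forall>y\<in>L. (\<forall>n. decr_rearr x n \<le> decr_rearr y n) \<longrightarrow> x \<in> L \<and> N x \<le> N y)"

text \<open>Topological dual of (L,N): bounded linear functionals on L, normalised to vanish
  outside L (so that they are determined by their values on L).\<close>
definition dual_space :: "seq set \<Rightarrow> (seq \<Rightarrow> real) \<Rightarrow> (seq \<Rightarrow> real) set" where
  "dual_space L N = {f.
      (\<forall>x\<in>L. \<forall>y\<in>L. f (\<lambda>k. x k + y k) = f x + f y)
    \<and> (\<forall>c. \<forall>x\<in>L. f (\<lambda>k. c * x k) = c * f x)
    \<and> (\<exists>C. \<forall>x\<in>L. \<bar>f x\<bar> \<le> C * N x)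
    \<and> (\<forall>x. x \<notin> L \<longrightarrow> f x = 0)}"

definition dual_norm :: "seq set \<Rightarrow> (seq \<Rightarrow> real) \<Rightarrow> (seq \<Rightarrow> real) \<Rightarrow> real" where
  "dual_norm L N f = Sup {\<bar>f x\<bar> | x. x \<in> L \<and> N x \<le> 1}"

text \<open>Reflexivity: every bounded linear functional on the dual is evaluation at a point
  of L (the canonical embedding into the bidual is onto).\<close>
definition reflexive_space :: "seq set \<Rightarrow> (seq \<Rightarrow> real) \<Rightarrow> bool" where
  "reflexive_space L N \<longleftrightarrow>
     (\<forall>\<Phi> :: (seq \<Rightarrow> real) \<Rightarrow> real.
        (\<forall>f\<in>dual_space L N. \<forall>g\<in>dual_space L N. \<Phi> (\<lambda>x. f x + g x) = \<Phi> f + \<Phi> g)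
      \<and> (\<forall>c. \<forall>f\<in>dual_space L N. \<Phi> (\<lambda>x. c * f x) = c * \<Phi> f)
      \<and> (\<exists>C. \<forall>f\<in>dual_space L N. \<bar>\<Phi> f\<bar> \<le> C * dual_norm L N f)
      \<longrightarrow> (\<exists>x\<in>L. \<forall>f\<in>dual_space L N. \<Phi> f = f x))"

end

theory Submission
  imports Defs "HOL-Analysis.L2_Norm"
begin

abbreviation mu where "mu \<equiv> decr_rearr"

lemma linf_bound: "x \<in> linf \<Longrightarrow> \<exists>B\<ge>0. \<forall>k. \<bar>x k\<bar> \<le> B"
  unfolding linf_def by (auto intro: order_trans[OF abs_ge_zero] )

lemma mu_set_ne: assumes "x \<in> linf"
  shows "{s. 0 \<le> s \<and> finite {k. \<bar>x k\<bar> > s} \<and> card {k. \<bar>x k\<bar> > s} \<le> n} \<noteq> {}"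
proof -
  obtain B where B: "B \<ge> 0" "\<forall>k. \<bar>x k\<bar> \<le> B" using linf_bound[OF assms] by blast
  have "{k. \<bar>x k\<bar> > B} = {}" using B by (simp add: not_less)
  then have "B \<in> {s. 0 \<le> s \<and> finite {k. \<bar>x k\<bar> > s} \<and> card {k. \<bar>x k\<bar> > s} \<le> n}"
    using B by simp
  then show ?thesis by blast
qed

lemma mu_nonneg: "x \<in> linf \<Longrightarrow> 0 \<le> mu x n"
  unfolding decr_rearr_def by (rule cInf_greatest[OF mu_set_ne]) auto

lemma mu_le_bound: assumes "\<forall>k. \<bar>x k\<bar> \<le> c" "0 \<le> c" shows "mu x n \<le> c"
proof -
  have "{k. \<bar>x k\<bar> > c} = {}" using assms by (simp add: not_less)
  then show ?thesis unfolding decr_rearr_def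
    by (intro cInf_lower) (auto simp: assms intro!: bdd_belowI[where m=0])
qed

lemma mu_le_zero: assumes "finite S" "card S \<le> n" "\<forall>k. k \<notin> S \<longrightarrow> x k = 0" shows "mu x n \<le> 0"
proof -
  have sub: "{k. \<bar>x k\<bar> > 0} \<subseteq> S" using assms by force
  then have "finite {k. \<bar>x k\<bar> > 0}" using assms finite_subset by blast
  moreover have "card {k. \<bar>x k\<bar> > 0} \<le> n" using card_mono[OF assms(1) sub] assms by linarith
  ultimately show ?thesis unfolding decr_rearr_def
    by (intro cInf_lower) (auto intro!: bdd_belowI[where m=0])
qed

lemma mu_ge: assumes "x \<in> linf" "finite S" "n < card S" "\<forall>k\<in>S. c \<le> \<bar>x k\<bar>" shows "c \<le> mu x n"
  unfolding decr_rearr_def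
proof (rule cInf_greatest[OF mu_set_ne[OF assms(1)]])
  fix s assume s: "s \<in> {s. 0 \<le> s \<and> finite {k. \<bar>x k\<bar> > s} \<and> card {k. \<bar>x k\<bar> > s} \<le> n}"
  show "c \<le> s"
  proof (rule ccontr)
    assume "\<not> c \<le> s"
    then have "S \<subseteq> {k. \<bar>x k\<bar> > s}" using assms by force
    then have "card S \<le> card {k. \<bar>x k\<bar> > s}" using s card_mono by blast
    then show False using s assms by simp
  qed
qed

lemma sum_sq_le_mu: assumes "x \<in> linf" "finite S"
  shows "(\<Sum>k\<in>S. (x k)\<^sup>2) \<le> (\<Sum>i<card S. (mu x i)\<^sup>2)"
  using assms(2)
proof (induction "card S" arbitrary: S)
  case 0
  then show ?case by simp
next
  case (Suc j)
  then have ne: "S \<noteq> {}" by auto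
  define c where "c = Min ((\<lambda>k. \<bar>x k\<bar>) ` S)"
  have "c \<in> (\<lambda>k. \<bar>x k\<bar>) ` S" unfolding c_def using ne Suc by simp
  then obtain k where k: "k \<in> S" "\<bar>x k\<bar> = c" by auto
  have cmin: "\<forall>k'\<in>S. c \<le> \<bar>x k'\<bar>" unfolding c_def using Suc by simp
  have "card (S - {k}) = j" using Suc k by simp
  then have IH: "(\<Sum>k\<in>S-{k}. (x k)\<^sup>2) \<le> (\<Sum>i<j. (mu x i)\<^sup>2)"
    using Suc.hyps(1)[of "S - {k}"] Suc.prems by simp
  have "c \<le> mu x j" using mu_ge[OF assms(1) Suc(3), of j c] cmin Suc(2) by simp
  then have "(x k)\<^sup>2 \<le> (mu x j)\<^sup>2" using k
    by (metis abs_ge_zero power2_abs power_mono)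
  moreover have "(\<Sum>k\<in>S. (x k)\<^sup>2) = (x k)\<^sup>2 + (\<Sum>k\<in>S-{k}. (x k)\<^sup>2)"
    using Suc k by (simp add: sum.remove)
  ultimately show ?case using IH Suc(2)[symmetric] by simp
qed

lemma c0_finite_ge: fixes x :: seq assumes "x \<longlonglongrightarrow> 0" "s > 0" shows "finite {k. s \<le> \<bar>x k\<bar>}"
proof -
  obtain N where N: "\<forall>n\<ge>N. norm (x n - 0) < s" using assms unfolding LIMSEQ_iff by blast
  have "{k. s \<le> \<bar>x k\<bar>} \<subseteq> {..<N}" proof
    fix k assume "k \<in> {k. s \<le> \<bar>x k\<bar>}"
    then have "\<not> norm (x k - 0) < s" by simp
    then show "k \<in> {..<N}" using N not_le by auto
  qed
  then show ?thesis using finite_subset by blast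
qed

lemma c0_finite_gt: fixes x :: seq assumes "x \<longlonglongrightarrow> 0" "s > 0" shows "finite {k. s < \<bar>x k\<bar>}"
  using c0_finite_ge[OF assms] by (rule finite_subset[rotated]) (auto simp: less_imp_le)

lemma mu_attained: assumes "x \<in> linf" "x \<longlonglongrightarrow> 0" "mu x n > 0"
  shows "n < card {k. mu x n \<le> \<bar>x k\<bar>}"
proof (rule ccontr)
  define s where "s = mu x n"
  define A where "A = {k. s \<le> \<bar>x k\<bar>}"
  assume "\<not> n < card {k. mu x n \<le> \<bar>x k\<bar>}"
  then have cA: "card A \<le> n" unfolding A_def s_def by simp
  have s0: "s > 0" using assms s_def by simp
  have fA: "finite A" unfolding A_def using c0_finite_ge[OF assms(2) s0] .
  define V where "V = (\<lambda>k. \<bar>x k\<bar>) ` {k. s/2 < \<bar>x k\<bar> \<and> \<bar>x k\<bar> < s}"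
  have fV: "finite V" unfolding V_def
    by (rule finite_imageI, rule finite_subset[OF _ c0_finite_gt[OF assms(2), of "s/2"]]) (use s0 in auto)
  define s' where "s' = Max (insert (s/2) V)"
  have s'ge: "s/2 \<le> s'" unfolding s'_def using fV by (intro Max_ge) auto
  have s'lt: "s' < s" unfolding s'_def using fV s0 by (auto simp: V_def)
  have Veq: "\<And>k. s/2 < \<bar>x k\<bar> \<Longrightarrow> \<bar>x k\<bar> < s \<Longrightarrow> \<bar>x k\<bar> \<le> s'"
    unfolding s'_def using fV by (auto simp: V_def)
  have eq: "{k. s' < \<bar>x k\<bar>} = A"
  proof
    show "{k. s' < \<bar>x k\<bar>} \<subseteq> A" unfolding A_def
    proof
      fix k assume "k \<in> {k. s' < \<bar>x k\<bar>}"
      then have "s' < \<bar>x k\<bar>" by simp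
      then show "k \<in> {k. s \<le> \<bar>x k\<bar>}" using Veq[of k] s'ge by force
    qed
    show "A \<subseteq> {k. s' < \<bar>x k\<bar>}" unfolding A_def using s'lt by auto
  qed
  have "s' \<in> {s. 0 \<le> s \<and> finite {k. \<bar>x k\<bar> > s} \<and> card {k. \<bar>x k\<bar> > s} \<le> n}"
    using eq fA cA s'ge s0 by simp
  then have "s \<le> s'" unfolding s_def decr_rearr_def
    by (intro cInf_lower) (auto intro!: bdd_belowI[where m=0])
  then show False using s'lt by simp
qed

lemma mu_realized: assumes "x \<in> linf" "x \<longlonglongrightarrow> 0"
  shows "\<exists>S. finite S \<and> card S = n \<and> (\<Sum>i<n. (mu x i)\<^sup>2) \<le> (\<Sum>k\<in>S. (x k)\<^sup>2)"
proof (induction n)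
  case 0
  show ?case by (intro exI[of _ "{}"]) simp
next
  case (Suc n)
  then obtain S where S: "finite S" "card S = n" "(\<Sum>i<n. (mu x i)\<^sup>2) \<le> (\<Sum>k\<in>S. (x k)\<^sup>2)" by blast
  have "\<exists>k. k \<notin> S \<and> (mu x n)\<^sup>2 \<le> (x k)\<^sup>2"
  proof (cases "mu x n > 0")
    case True
    define A where "A = {k. mu x n \<le> \<bar>x k\<bar>}"
    have "n < card A" unfolding A_def using mu_attained[OF assms True] .
    then have "\<not> A \<subseteq> S" using S(1,2) card_mono by (metis not_le)
    then obtain k where "k \<in> A" "k \<notin> S" by blast
    then have "mu x n \<le> \<bar>x k\<bar>" unfolding A_def by simp
    then have "(mu x n)\<^sup>2 \<le> (\<bar>x k\<bar>)\<^sup>2" using mu_nonneg[OF assms(1)] power_mono by blast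
    then show ?thesis using \<open>k \<notin> S\<close> by auto
  next
    case False
    then have "mu x n = 0" using mu_nonneg[OF assms(1)] by (meson antisym not_le)
    moreover obtain k where "k \<notin> S" using ex_new_if_finite[OF infinite_UNIV_nat S(1)] by blast
    ultimately show ?thesis by auto
  qed
  then obtain k where k: "k \<notin> S" "(mu x n)\<^sup>2 \<le> (x k)\<^sup>2" by blast
  have "(\<Sum>i<Suc n. (mu x i)\<^sup>2) \<le> (\<Sum>k\<in>insert k S. (x k)\<^sup>2)"
    using S k by simp
  then show ?case using S k by (intro exI[of _ "insert k S"]) simp
qed

definition sqs :: "seq \<Rightarrow> nat set \<Rightarrow> real" where
  "sqs x S = (\<Sum>k\<in>S. (x k)\<^sup>2)"

definition tau :: "(nat \<Rightarrow> nat) \<Rightarrow> nat \<Rightarrow> seq \<Rightarrow> real" where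
  "tau m t x = Sup {sqs x S / real (m t) | S. finite S \<and> card S \<le> m t}"

definition LFs :: "(nat \<Rightarrow> nat) \<Rightarrow> seq set" where
  "LFs m = {x \<in> linf. summable (\<lambda>t. tau m t x)}"

definition NFs :: "(nat \<Rightarrow> nat) \<Rightarrow> seq \<Rightarrow> real" where
  "NFs m x = sqrt (\<Sum>t. tau m t x)"

lemma sqs_nonneg: "0 \<le> sqs x S" unfolding sqs_def by (simp add: sum_nonneg)

lemma sqs_le_card: fixes B :: real assumes "\<forall>k. \<bar>x k\<bar> \<le> B" shows "sqs x S \<le> card S * B\<^sup>2"
proof -
  have "sqs x S \<le> (\<Sum>k\<in>S. B\<^sup>2)" unfolding sqs_def
  proof (intro sum_mono)
    fix k have "\<bar>x k\<bar> \<le> B" using assms by blast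
    then have "\<bar>x k\<bar>\<^sup>2 \<le> B\<^sup>2" by (intro power_mono) auto
    then show "(x k)\<^sup>2 \<le> B\<^sup>2" by simp
  qed
  then show ?thesis by simp
qed

locale wt =
  fixes m :: "nat \<Rightarrow> nat"
  assumes m_pos: "\<And>t. 1 \<le> m t"
begin

abbreviation "\<tau> \<equiv> tau m"
abbreviation "LF \<equiv> LFs m"
abbreviation "NF \<equiv> NFs m"

lemma tau_bdd: assumes "x \<in> linf" shows "bdd_above {sqs x S / real (m t) | S. finite S \<and> card S \<le> m t}"
proof -
  obtain B where B: "B \<ge> 0" "\<forall>k. \<bar>x k\<bar> \<le> B" using linf_bound[OF assms] by blast
  have "sqs x S / real (m t) \<le> B\<^sup>2" if "card S \<le> m t" for S
  proof -
    have "sqs x S \<le> card S * B\<^sup>2" using sqs_le_card B by blast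
    also have "\<dots> \<le> m t * B\<^sup>2" using that by (simp add: mult_right_mono)
    finally show ?thesis using m_pos[of t] by (simp add: divide_le_eq mult.commute)
  qed
  then show ?thesis by (auto intro!: bdd_aboveI[where M="B\<^sup>2"])
qed

lemma tau_upper: assumes "x \<in> linf" "finite S" "card S \<le> m t"
  shows "sqs x S / real (m t) \<le> \<tau> t x"
proof -
  have "sqs x S / real (m t) \<in> {sqs x S / real (m t) | S. finite S \<and> card S \<le> m t}"
    using assms(2,3) by (intro CollectI exI[of _ S]) simp
  then show ?thesis unfolding tau_def by (rule cSup_upper[OF _ tau_bdd[OF assms(1)]])
qed

lemma tau_least: assumes "\<And>S. finite S \<Longrightarrow> card S \<le> m t \<Longrightarrow> sqs x S / real (m t) \<le> c"
  shows "\<tau> t x \<le> c"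
proof -
  have ne: "{sqs x S / real (m t) | S. finite S \<and> card S \<le> m t} \<noteq> {}"
    by (intro ex_in_conv[THEN iffD1] exI[of _ "sqs x {} / real (m t)"] CollectI exI[of _ "{}"]) simp
  show ?thesis unfolding tau_def
  proof (rule cSup_least[OF ne])
    fix z assume "z \<in> {sqs x S / real (m t) | S. finite S \<and> card S \<le> m t}"
    then obtain S where "z = sqs x S / real (m t)" "finite S" "card S \<le> m t" by blast
    then show "z \<le> c" using assms by simp
  qed
qed

lemma tau_nonneg: assumes "x \<in> linf" shows "0 \<le> \<tau> t x"
  using tau_upper[OF assms, of "{}" t] by (simp add: sqs_def)

lemma tau_le_bound: fixes B :: real assumes "\<forall>k. \<bar>x k\<bar> \<le> B" shows "\<tau> t x \<le> B\<^sup>2"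
proof (rule tau_least)
  fix S :: "nat set" assume "finite S" "card S \<le> m t"
  have "sqs x S \<le> card S * B\<^sup>2" using sqs_le_card assms by blast
  also have "\<dots> \<le> m t * B\<^sup>2" using \<open>card S \<le> m t\<close> by (simp add: mult_right_mono)
  finally show "sqs x S / real (m t) \<le> B\<^sup>2" using m_pos[of t] by (simp add: divide_le_eq mult.commute)
qed

lemma linf_mono: assumes "x \<in> linf" "\<forall>k. \<bar>y k\<bar> \<le> \<bar>x k\<bar>" shows "y \<in> linf"
  using assms unfolding linf_def by (auto intro: order_trans)

lemma tau_mono: assumes "x \<in> linf" "\<forall>k. \<bar>y k\<bar> \<le> \<bar>x k\<bar>" shows "\<tau> t y \<le> \<tau> t x"
proof (rule tau_least)
  fix S :: "nat set" assume S: "finite S" "card S \<le> m t"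
  have "sqs y S \<le> sqs x S" unfolding sqs_def
  proof (intro sum_mono)
    fix k have "\<bar>y k\<bar> \<le> \<bar>x k\<bar>" using assms by blast
    then have "\<bar>y k\<bar>\<^sup>2 \<le> \<bar>x k\<bar>\<^sup>2" by (intro power_mono) auto
    then show "(y k)\<^sup>2 \<le> (x k)\<^sup>2" by simp
  qed
  then have "sqs y S / real (m t) \<le> sqs x S / real (m t)" by (simp add: divide_right_mono)
  also have "\<dots> \<le> \<tau> t x" using tau_upper[OF assms(1) S] .
  finally show "sqs y S / real (m t) \<le> \<tau> t x" .
qed

lemma coord_le_tau: assumes "x \<in> linf" shows "(x k)\<^sup>2 / real (m t) \<le> \<tau> t x"
  using tau_upper[OF assms, of "{k}" t] m_pos[of t] by (simp add: sqs_def)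

lemma tau_zero: "\<tau> t (\<lambda>k. 0) = 0"
proof -
  have "\<tau> t (\<lambda>k. 0) \<le> 0" using tau_le_bound[of "\<lambda>k. 0" 0] by simp
  moreover have "(\<lambda>k. 0::real) \<in> linf" unfolding linf_def by (intro CollectI exI[of _ 0]) simp
  ultimately show ?thesis using tau_nonneg by (meson antisym)
qed

lemma linf_scale: "x \<in> linf \<Longrightarrow> (\<lambda>k. c * x k) \<in> linf"
  unfolding linf_def
proof clarify
  fix B assume "\<forall>k. \<bar>x k\<bar> \<le> B"
  then have "\<forall>k. \<bar>c * x k\<bar> \<le> \<bar>c\<bar> * B" by (simp add: abs_mult mult_left_mono)
  then show "\<exists>B. \<forall>k. \<bar>c * x k\<bar> \<le> B" by blast
qed

lemma linf_add: "x \<in> linf \<Longrightarrow> y \<in> linf \<Longrightarrow> (\<lambda>k. x k + y k) \<in> linf"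
  unfolding linf_def
proof clarify
  fix B C assume "\<forall>k. \<bar>x k\<bar> \<le> B" "\<forall>k. \<bar>y k\<bar> \<le> C"
  then have "\<forall>k. \<bar>x k + y k\<bar> \<le> B + C" by (meson abs_triangle_ineq add_mono order_trans)
  then show "\<exists>B. \<forall>k. \<bar>x k + y k\<bar> \<le> B" by blast
qed

lemma tau_scale_le: assumes "x \<in> linf" shows "\<tau> t (\<lambda>k. c * x k) \<le> c\<^sup>2 * \<tau> t x"
proof (rule tau_least)
  fix S :: "nat set" assume S: "finite S" "card S \<le> m t"
  have "sqs (\<lambda>k. c * x k) S = c\<^sup>2 * sqs x S" unfolding sqs_def
    by (simp add: power_mult_distrib sum_distrib_left)
  then have "sqs (\<lambda>k. c * x k) S / real (m t) = c\<^sup>2 * (sqs x S / real (m t))" by simp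
  also have "\<dots> \<le> c\<^sup>2 * \<tau> t x" using tau_upper[OF assms S] by (rule mult_left_mono) simp
  finally show "sqs (\<lambda>k. c * x k) S / real (m t) \<le> c\<^sup>2 * \<tau> t x" .
qed

lemma tau_scale: assumes "x \<in> linf" shows "\<tau> t (\<lambda>k. c * x k) = c\<^sup>2 * \<tau> t x"
proof (cases "c = 0")
  case True
  then show ?thesis using tau_zero by simp
next
  case False
  have "\<tau> t x = \<tau> t (\<lambda>k. (1/c) * (c * x k))" using False by simp
  also have "\<dots> \<le> (1/c)\<^sup>2 * \<tau> t (\<lambda>k. c * x k)" by (rule tau_scale_le[OF linf_scale[OF assms]])
  finally have "c\<^sup>2 * \<tau> t x \<le> c\<^sup>2 * ((1/c)\<^sup>2 * \<tau> t (\<lambda>k. c * x k))"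
    by (rule mult_left_mono) simp
  also have "\<dots> = \<tau> t (\<lambda>k. c * x k)" using False by (simp add: power_one_over)
  finally have "c\<^sup>2 * \<tau> t x \<le> \<tau> t (\<lambda>k. c * x k)" .
  then show ?thesis using tau_scale_le[OF assms, of t c] by linarith
qed

lemma tau_triangle: assumes "x \<in> linf" "y \<in> linf"
  shows "\<tau> t (\<lambda>k. x k + y k) \<le> (sqrt (\<tau> t x) + sqrt (\<tau> t y))\<^sup>2"
proof (rule tau_least)
  fix S :: "nat set" assume S: "finite S" "card S \<le> m t"
  define r where "r = sqrt (real (m t))"
  have r: "r > 0" "r\<^sup>2 = real (m t)" unfolding r_def using m_pos[of t] by auto
  have eq: "sqrt (sqs z S / real (m t)) = L2_set z S / r" for z
    unfolding sqs_def L2_set_def r_def by (simp add: real_sqrt_divide)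
  have "L2_set (\<lambda>k. x k + y k) S \<le> L2_set x S + L2_set y S" by (rule L2_set_triangle_ineq)
  then have "sqrt (sqs (\<lambda>k. x k + y k) S / real (m t)) \<le> sqrt (sqs x S / real (m t)) + sqrt (sqs y S / real (m t))"
    unfolding eq using r by (simp add: add_divide_distrib[symmetric] divide_right_mono)
  also have "\<dots> \<le> sqrt (\<tau> t x) + sqrt (\<tau> t y)"
    using tau_upper[OF assms(1) S] tau_upper[OF assms(2) S] by (simp add: add_mono)
  finally have that_le: "sqrt (sqs (\<lambda>k. x k + y k) S / real (m t)) \<le> sqrt (\<tau> t x) + sqrt (\<tau> t y)" .
  show "sqs (\<lambda>k. x k + y k) S / real (m t) \<le> (sqrt (\<tau> t x) + sqrt (\<tau> t y))\<^sup>2"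
  proof -
    let ?q = "sqs (\<lambda>k. x k + y k) S / real (m t)"
    have q0: "0 \<le> ?q" by (intro divide_nonneg_nonneg sqs_nonneg) simp
    have "?q = (sqrt ?q)\<^sup>2" using q0 by simp
    also have "\<dots> \<le> (sqrt (\<tau> t x) + sqrt (\<tau> t y))\<^sup>2"
      using that_le q0 by (intro power_mono) simp_all
    finally show ?thesis .
  qed
qed

end

context wt begin

lemma two_ab_le: fixes a b :: real shows "2 * (a * b) \<le> a\<^sup>2 + b\<^sup>2"
  using zero_le_power2[of "a-b"] power2_diff[of a b] by linarith

lemma LF_linf: "x \<in> LF \<Longrightarrow> x \<in> linf" unfolding LFs_def by simp
lemma LF_summable: "x \<in> LF \<Longrightarrow> summable (\<lambda>t. \<tau> t x)" unfolding LFs_def by simp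

lemma suminf_tau_nonneg: assumes "x \<in> LF" shows "0 \<le> (\<Sum>t. \<tau> t x)"
  using suminf_nonneg[OF LF_summable[OF assms] tau_nonneg[OF LF_linf[OF assms]]] by simp

lemma NF_sq: assumes "x \<in> LF" shows "(NF x)\<^sup>2 = (\<Sum>t. \<tau> t x)"
  unfolding NFs_def using suminf_tau_nonneg[OF assms] by simp

lemma NF_nonneg: assumes "x \<in> LF" shows "0 \<le> NF x"
  unfolding NFs_def using suminf_tau_nonneg[OF assms] by simp

lemma tau_le_NF_sq: assumes "x \<in> LF" shows "\<tau> t x \<le> (NF x)\<^sup>2"
proof -
  have "sum (\<lambda>t. \<tau> t x) {t} \<le> (\<Sum>t. \<tau> t x)"
    by (rule sum_le_suminf[OF LF_summable[OF assms]]) (use tau_nonneg[OF LF_linf[OF assms]] in auto)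
  then show ?thesis using NF_sq[OF assms] by simp
qed

lemma coord_le_NF: assumes "x \<in> LF" shows "\<bar>x k\<bar> \<le> sqrt (real (m 0)) * NF x"
proof -
  have "(x k)\<^sup>2 / real (m 0) \<le> (NF x)\<^sup>2"
    using coord_le_tau[OF LF_linf[OF assms]] tau_le_NF_sq[OF assms] order_trans by blast
  then have "(x k)\<^sup>2 \<le> real (m 0) * (NF x)\<^sup>2" using m_pos[of 0] by (simp add: divide_le_eq mult.commute)
  then have "sqrt ((x k)\<^sup>2) \<le> sqrt (real (m 0) * (NF x)\<^sup>2)" by (rule real_sqrt_le_mono)
  then show ?thesis using NF_nonneg[OF assms] by (simp add: real_sqrt_mult)
qed

lemma zero_linf: "(\<lambda>k. 0::real) \<in> linf" unfolding linf_def by (intro CollectI exI[of _ 0]) simp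

lemma LF_zero: "(\<lambda>k. 0) \<in> LF" unfolding LFs_def using zero_linf tau_zero by simp

lemma NF_zero: "NF (\<lambda>k. 0) = 0" unfolding NFs_def using tau_zero by simp

lemma LF_scale: assumes "x \<in> LF" shows "(\<lambda>k. c * x k) \<in> LF"
  unfolding LFs_def using tau_scale[OF LF_linf[OF assms]] summable_mult[OF LF_summable[OF assms], of "c\<^sup>2"]
    linf_scale[OF LF_linf[OF assms]] by simp

lemma NF_scale: assumes "x \<in> LF" shows "NF (\<lambda>k. c * x k) = \<bar>c\<bar> * NF x"
proof -
  have "(\<Sum>t. \<tau> t (\<lambda>k. c * x k)) = c\<^sup>2 * (\<Sum>t. \<tau> t x)"
    using tau_scale[OF LF_linf[OF assms]] suminf_mult[OF LF_summable[OF assms], of "c\<^sup>2"] by simp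
  then show ?thesis unfolding NFs_def by (simp add: real_sqrt_mult)
qed

lemma LF_add: assumes "x \<in> LF" "y \<in> LF" shows "(\<lambda>k. x k + y k) \<in> LF"
proof -
  have lx: "x \<in> linf" and ly: "y \<in> linf" using assms LF_linf by auto
  have h: "norm (\<tau> t (\<lambda>k. x k + y k)) \<le> 2 * \<tau> t x + 2 * \<tau> t y" for t
  proof -
    have "\<tau> t (\<lambda>k. x k + y k) \<le> (sqrt (\<tau> t x) + sqrt (\<tau> t y))\<^sup>2" by (rule tau_triangle[OF lx ly])
    also have "\<dots> \<le> 2 * (sqrt (\<tau> t x))\<^sup>2 + 2 * (sqrt (\<tau> t y))\<^sup>2"
      using two_ab_le[of "sqrt (\<tau> t x)" "sqrt (\<tau> t y)"] unfolding power2_sum by linarith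
    also have "\<dots> = 2 * \<tau> t x + 2 * \<tau> t y" using tau_nonneg[OF lx, of t] tau_nonneg[OF ly, of t] by simp
    finally show ?thesis using tau_nonneg[OF linf_add[OF lx ly]] by simp
  qed
  have sg: "summable (\<lambda>t. 2 * \<tau> t x + 2 * \<tau> t y)"
    using summable_add[OF summable_mult[OF LF_summable[OF assms(1)]] summable_mult[OF LF_summable[OF assms(2)]]] by simp
  have "summable (\<lambda>t. \<tau> t (\<lambda>k. x k + y k))"
    by (rule summable_comparison_test'[where N=0, OF sg h])
  then show ?thesis unfolding LFs_def using linf_add[OF lx ly] by simp
qed

lemma suminf_prod_le:
  fixes a b :: "nat \<Rightarrow> real"
  assumes a: "\<And>t. 0 \<le> a t" and b: "\<And>t. 0 \<le> b t" and sa: "summable (\<lambda>t. (a t)\<^sup>2)" and sb: "summable (\<lambda>t. (b t)\<^sup>2)"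
  shows "summable (\<lambda>t. a t * b t) \<and> (\<Sum>t. a t * b t) \<le> sqrt (\<Sum>t. (a t)\<^sup>2) * sqrt (\<Sum>t. (b t)\<^sup>2)"
proof
  have h: "norm (a t * b t) \<le> ((a t)\<^sup>2 + (b t)\<^sup>2) / 2" for t
    using a[of t] b[of t] two_ab_le[of "a t" "b t"] by simp
  have sg: "summable (\<lambda>t. ((a t)\<^sup>2 + (b t)\<^sup>2) / 2)" by (rule summable_divide[OF summable_add[OF sa sb]])
  show sab: "summable (\<lambda>t. a t * b t)" by (rule summable_comparison_test'[where N=0, OF sg h])
  show "(\<Sum>t. a t * b t) \<le> sqrt (\<Sum>t. (a t)\<^sup>2) * sqrt (\<Sum>t. (b t)\<^sup>2)"
  proof (rule suminf_le_const[OF sab])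
    fix n
    have "(\<Sum>t<n. a t * b t) = (\<Sum>t<n. \<bar>a t\<bar> * \<bar>b t\<bar>)" using a b by simp
    also have "\<dots> \<le> L2_set a {..<n} * L2_set b {..<n}" by (rule L2_set_mult_ineq)
    also have "\<dots> \<le> sqrt (\<Sum>t. (a t)\<^sup>2) * sqrt (\<Sum>t. (b t)\<^sup>2)"
      unfolding L2_set_def
      using sum_le_suminf[OF sa, of "{..<n}"] sum_le_suminf[OF sb, of "{..<n}"]
      by (intro mult_mono real_sqrt_le_mono) (auto intro!: sum_nonneg suminf_nonneg sa)
    finally show "(\<Sum>t<n. a t * b t) \<le> sqrt (\<Sum>t. (a t)\<^sup>2) * sqrt (\<Sum>t. (b t)\<^sup>2)" .
  qed
qed

lemma NF_triangle: assumes "x \<in> LF" "y \<in> LF" shows "NF (\<lambda>k. x k + y k) \<le> NF x + NF y"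
proof -
  have lx: "x \<in> linf" and ly: "y \<in> linf" using assms LF_linf by auto
  define a where "a t = sqrt (\<tau> t x)" for t
  define b where "b t = sqrt (\<tau> t y)" for t
  have a2: "(a t)\<^sup>2 = \<tau> t x" for t unfolding a_def using tau_nonneg[OF lx] by simp
  have b2: "(b t)\<^sup>2 = \<tau> t y" for t unfolding b_def using tau_nonneg[OF ly] by simp
  have sa: "summable (\<lambda>t. (a t)\<^sup>2)" unfolding a2 using LF_summable[OF assms(1)] .
  have sb: "summable (\<lambda>t. (b t)\<^sup>2)" unfolding b2 using LF_summable[OF assms(2)] .
  from suminf_prod_le[of a b] sa sb have sab: "summable (\<lambda>t. a t * b t)"
    and ab: "(\<Sum>t. a t * b t) \<le> NF x * NF y"
    unfolding a2 b2 NFs_def using tau_nonneg[OF lx] tau_nonneg[OF ly] by (auto simp: a_def b_def)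
  have "(\<Sum>t. \<tau> t (\<lambda>k. x k + y k)) \<le> (\<Sum>t. (a t)\<^sup>2 + 2 * (a t * b t) + (b t)\<^sup>2)"
  proof (rule suminf_le)
    show "summable (\<lambda>t. \<tau> t (\<lambda>k. x k + y k))" by (rule LF_summable[OF LF_add[OF assms]])
    show "summable (\<lambda>t. (a t)\<^sup>2 + 2 * (a t * b t) + (b t)\<^sup>2)"
      by (rule summable_add[OF summable_add[OF sa summable_mult[OF sab]] sb])
    fix t show "\<tau> t (\<lambda>k. x k + y k) \<le> (a t)\<^sup>2 + 2 * (a t * b t) + (b t)\<^sup>2"
      using tau_triangle[OF lx ly, of t] unfolding a_def b_def power2_sum by simp
  qed
  also have "\<dots> = (\<Sum>t. (a t)\<^sup>2) + 2 * (\<Sum>t. a t * b t) + (\<Sum>t. (b t)\<^sup>2)"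
  proof -
    have s1: "summable (\<lambda>t. (a t)\<^sup>2 + 2 * (a t * b t))" by (intro summable_add sa summable_mult sab)
    have "(\<Sum>t. (a t)\<^sup>2 + 2 * (a t * b t) + (b t)\<^sup>2) = (\<Sum>t. (a t)\<^sup>2 + 2 * (a t * b t)) + (\<Sum>t. (b t)\<^sup>2)"
      using suminf_add[OF s1 sb] by simp
    also have "(\<Sum>t. (a t)\<^sup>2 + 2 * (a t * b t)) = (\<Sum>t. (a t)\<^sup>2) + (\<Sum>t. 2 * (a t * b t))"
      using suminf_add[OF sa summable_mult[OF sab]] by simp
    also have "(\<Sum>t. 2 * (a t * b t)) = 2 * (\<Sum>t. a t * b t)" using suminf_mult[OF sab] by simp
    finally show ?thesis .
  qed
  also have "\<dots> \<le> (NF x)\<^sup>2 + 2 * (NF x * NF y) + (NF y)\<^sup>2"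
    using ab NF_sq assms a2 b2 by simp
  also have "\<dots> = (NF x + NF y)\<^sup>2" by (simp add: power2_sum)
  finally have "(NF (\<lambda>k. x k + y k))\<^sup>2 \<le> (NF x + NF y)\<^sup>2" using NF_sq[OF LF_add[OF assms]] by simp
  then show ?thesis using power2_le_imp_le add_nonneg_nonneg[OF NF_nonneg[OF assms(1)] NF_nonneg[OF assms(2)]] by blast
qed

lemma NF_eq_0: assumes "x \<in> LF" "NF x = 0" shows "x = (\<lambda>k. 0)"
proof
  fix k show "x k = 0" using coord_le_NF[OF assms(1), of k] assms(2) by simp
qed

end

context wt begin

lemma LF_diff: assumes "x \<in> LF" "y \<in> LF" shows "(\<lambda>k. x k - y k) \<in> LF"
  using LF_add[OF assms(1) LF_scale[OF assms(2), of "-1"]] by simp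

lemma NF_diff_sym: assumes "x \<in> LF" "y \<in> LF" shows "NF (\<lambda>k. x k - y k) = NF (\<lambda>k. y k - x k)"
  using NF_scale[OF LF_diff[OF assms], of "-1"] by simp

lemma LF_c0: assumes "x \<in> LF" shows "x \<longlonglongrightarrow> 0"
proof (rule ccontr)
  assume nc: "\<not> x \<longlonglongrightarrow> 0"
  then obtain r where r: "r > 0" "\<forall>no. \<exists>n\<ge>no. \<not> norm (x n - 0) < r" unfolding LIMSEQ_iff by blast
  define K where "K = {k. r \<le> \<bar>x k\<bar>}"
  have "infinite K"
  proof
    assume "finite K"
    then obtain b where b: "\<forall>n\<in>K. n \<le> b" using finite_nat_set_iff_bounded_le by blast
    obtain n where "n \<ge> Suc b" "\<not> norm (x n - 0) < r" using r(2) by blast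
    then have "n \<in> K" unfolding K_def by simp
    then show False using b \<open>n \<ge> Suc b\<close> by auto
  qed
  have big: "r\<^sup>2 \<le> \<tau> t x" for t
  proof -
    obtain S where S: "finite S" "card S = m t" "S \<subseteq> K" using infinite_arbitrarily_large[OF \<open>infinite K\<close>] by blast
    have "(\<Sum>k\<in>S. r\<^sup>2) \<le> sqs x S" unfolding sqs_def
    proof (rule sum_mono)
      fix k assume "k \<in> S"
      then have "r \<le> \<bar>x k\<bar>" using S K_def by auto
      then have "r\<^sup>2 \<le> \<bar>x k\<bar>\<^sup>2" using r by (intro power_mono) auto
      then show "r\<^sup>2 \<le> (x k)\<^sup>2" by simp
    qed
    then have "real (m t) * r\<^sup>2 \<le> sqs x S" using S by simp
    then have "r\<^sup>2 \<le> sqs x S / real (m t)" using m_pos[of t] by (simp add: le_divide_eq mult.commute)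
    also have "\<dots> \<le> \<tau> t x" using tau_upper[OF LF_linf[OF assms] S(1)] S(2) by simp
    finally show ?thesis .
  qed
  have "(\<lambda>t. \<tau> t x) \<longlonglongrightarrow> 0" by (rule summable_LIMSEQ_zero[OF LF_summable[OF assms]])
  then obtain N where "\<forall>n\<ge>N. norm (\<tau> n x - 0) < r\<^sup>2" unfolding LIMSEQ_iff using r by (meson zero_less_power)
  then have "\<tau> N x < r\<^sup>2" by auto
  then show False using big[of N] by simp
qed

lemma tau_sym: assumes "x \<in> linf" "y \<in> LF" "\<forall>n. mu x n \<le> mu y n"
  shows "\<tau> t x \<le> \<tau> t y"
proof (rule tau_least)
  fix S :: "nat set" assume S: "finite S" "card S \<le> m t"
  have ly: "y \<in> linf" using LF_linf[OF assms(2)] .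
  obtain S' where S': "finite S'" "card S' = card S" "(\<Sum>i<card S. (mu y i)\<^sup>2) \<le> sqs y S'"
    using mu_realized[OF ly LF_c0[OF assms(2)], of "card S"] unfolding sqs_def by blast
  have "sqs x S \<le> (\<Sum>i<card S. (mu x i)\<^sup>2)" unfolding sqs_def by (rule sum_sq_le_mu[OF assms(1) S(1)])
  also have "\<dots> \<le> (\<Sum>i<card S. (mu y i)\<^sup>2)"
  proof (rule sum_mono)
    fix i show "(mu x i)\<^sup>2 \<le> (mu y i)\<^sup>2" using assms(3) mu_nonneg[OF assms(1), of i] by (intro power_mono) auto
  qed
  also have "\<dots> \<le> sqs y S'" using S' by simp
  finally have "sqs x S / real (m t) \<le> sqs y S' / real (m t)" by (simp add: divide_right_mono)
  also have "\<dots> \<le> \<tau> t y" using tau_upper[OF ly S'(1)] S' S by simp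
  finally show "sqs x S / real (m t) \<le> \<tau> t y" .
qed

lemma LF_sym: assumes "x \<in> linf" "y \<in> LF" "\<forall>n. mu x n \<le> mu y n"
  shows "x \<in> LF \<and> NF x \<le> NF y"
proof -
  have h: "norm (\<tau> t x) \<le> \<tau> t y" for t using tau_sym[OF assms] tau_nonneg[OF assms(1)] by simp
  have sx: "summable (\<lambda>t. \<tau> t x)" by (rule summable_comparison_test'[where N=0, OF LF_summable[OF assms(2)] h])
  then have xL: "x \<in> LF" unfolding LFs_def using assms(1) by simp
  have "(\<Sum>t. \<tau> t x) \<le> (\<Sum>t. \<tau> t y)" by (rule suminf_le[OF _ sx LF_summable[OF assms(2)]]) (use tau_sym[OF assms] in auto)
  then have "NF x \<le> NF y" unfolding NFs_def by simp
  then show ?thesis using xL by simp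
qed

lemma tau_sum_le: assumes "x \<in> linf"
  and "\<And>Sf. (\<forall>t<R. finite (Sf t) \<and> card (Sf t) \<le> m t) \<Longrightarrow> (\<Sum>t<R. sqs x (Sf t) / real (m t)) \<le> B"
  shows "(\<Sum>t<R. \<tau> t x) \<le> B"
  using assms(2)
proof (induction R arbitrary: B)
  case 0
  then show ?case by auto
next
  case (Suc R)
  have "\<tau> R x \<le> B - (\<Sum>t<R. \<tau> t x)"
  proof (rule tau_least)
    fix S :: "nat set" assume S: "finite S" "card S \<le> m R"
    have "(\<Sum>t<R. \<tau> t x) \<le> B - sqs x S / real (m R)"
    proof (rule Suc.IH)
      fix Sf :: "nat \<Rightarrow> nat set" assume Sf: "\<forall>t<R. finite (Sf t) \<and> card (Sf t) \<le> m t"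
      let ?G = "Sf(R := S)"
      have "\<forall>t<Suc R. finite (?G t) \<and> card (?G t) \<le> m t" using Sf S by auto
      then have "(\<Sum>t<Suc R. sqs x (?G t) / real (m t)) \<le> B" by (rule Suc.prems)
      moreover have "(\<Sum>t<R. sqs x (?G t) / real (m t)) = (\<Sum>t<R. sqs x (Sf t) / real (m t))"
        by (intro sum.cong) auto
      ultimately show "(\<Sum>t<R. sqs x (Sf t) / real (m t)) \<le> B - sqs x S / real (m R)" by simp
    qed
    then show "sqs x S / real (m R) \<le> B - (\<Sum>t<R. \<tau> t x)" by simp
  qed
  then show ?case by simp
qed

lemma partial_tau_le_NF: assumes "x \<in> LF" shows "(\<Sum>t<R. \<tau> t x) \<le> (NF x)\<^sup>2"
  unfolding NF_sq[OF assms]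
  by (rule sum_le_suminf[OF LF_summable[OF assms]]) (use tau_nonneg[OF LF_linf[OF assms]] in auto)

lemma LF_complete: "complete_wrt LF NF"
  unfolding complete_wrt_def
proof (intro allI impI)
  fix X :: "nat \<Rightarrow> seq"
  assume H: "(\<forall>n. X n \<in> LF) \<and> (\<forall>e>0. \<exists>M. \<forall>m\<ge>M. \<forall>n\<ge>M. NF (\<lambda>k. X m k - X n k) < e)"
  then have XL: "\<And>n. X n \<in> LF" and C: "\<And>e. e > 0 \<Longrightarrow> \<exists>M. \<forall>m\<ge>M. \<forall>n\<ge>M. NF (\<lambda>k. X m k - X n k) < e"
    by auto
  define c where "c = sqrt (real (m 0))"
  have c1: "c \<ge> 1" unfolding c_def using m_pos[of 0] by simp
  have coord: "\<bar>X i k - X j k\<bar> \<le> c * NF (\<lambda>k. X i k - X j k)" for i j k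
    unfolding c_def using coord_le_NF[OF LF_diff[OF XL[of i] XL[of j]], of k] by simp
  have cau: "Cauchy (\<lambda>n. X n k)" for k
  proof (rule CauchyI)
    fix e :: real assume e: "e > 0"
    obtain M where M: "\<forall>i\<ge>M. \<forall>j\<ge>M. NF (\<lambda>k. X i k - X j k) < e / c" using C[of "e/c"] e c1 by auto
    have "\<forall>i\<ge>M. \<forall>j\<ge>M. norm (X i k - X j k) < e"
    proof (intro allI impI)
      fix i j assume "i \<ge> M" "j \<ge> M"
      then have "c * NF (\<lambda>k. X i k - X j k) < c * (e / c)" using M c1 by (intro mult_strict_left_mono) auto
      then show "norm (X i k - X j k) < e" using coord[of i k j] c1 by simp
    qed
    then show "\<exists>M. \<forall>i\<ge>M. \<forall>j\<ge>M. norm (X i k - X j k) < e" by blast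
  qed
  define x where "x k = lim (\<lambda>n. X n k)" for k
  have conv: "(\<lambda>n. X n k) \<longlonglongrightarrow> x k" for k
    unfolding x_def using cau[of k] Cauchy_convergent_iff convergent_LIMSEQ_iff by blast
  have claim: "\<exists>M. \<forall>n\<ge>M. (\<lambda>k. X n k - x k) \<in> LF \<and> NF (\<lambda>k. X n k - x k) \<le> e" if e: "e > 0" for e
  proof -
    obtain M where M: "\<forall>i\<ge>M. \<forall>j\<ge>M. NF (\<lambda>k. X i k - X j k) < e" using C[OF e] by blast
    have "(\<lambda>k. X n k - x k) \<in> LF \<and> NF (\<lambda>k. X n k - x k) \<le> e" if n: "n \<ge> M" for n
    proof -
      define d where "d k = X n k - x k" for k
      have bd: "\<bar>d k\<bar> \<le> c * e" for k
      proof -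
        have "(\<lambda>j. \<bar>X n k - X j k\<bar>) \<longlonglongrightarrow> \<bar>X n k - x k\<bar>" by (intro tendsto_intros conv)
        moreover have "\<forall>j\<ge>M. \<bar>X n k - X j k\<bar> \<le> c * e"
        proof (intro allI impI)
          fix j assume "j \<ge> M"
          then have "NF (\<lambda>k. X n k - X j k) \<le> e" using M n by (meson less_imp_le)
          then have "c * NF (\<lambda>k. X n k - X j k) \<le> c * e" using c1 by (intro mult_left_mono) auto
          then show "\<bar>X n k - X j k\<bar> \<le> c * e" using coord[of n k j] by linarith
        qed
        ultimately show ?thesis unfolding d_def by (intro LIMSEQ_le_const2) auto
      qed
      have dl: "d \<in> linf" unfolding linf_def using bd by blast
      have part: "(\<Sum>t<R. \<tau> t d) \<le> e\<^sup>2" for R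
      proof (rule tau_sum_le[OF dl])
        fix Sf :: "nat \<Rightarrow> nat set" assume Sf: "\<forall>t<R. finite (Sf t) \<and> card (Sf t) \<le> m t"
        have lim: "(\<lambda>j. \<Sum>t<R. sqs (\<lambda>k. X n k - X j k) (Sf t) / real (m t)) \<longlonglongrightarrow> (\<Sum>t<R. sqs d (Sf t) / real (m t))"
          unfolding sqs_def d_def using m_pos by (intro tendsto_intros conv) (auto simp: Suc_le_eq)
        have "\<forall>j\<ge>M. (\<Sum>t<R. sqs (\<lambda>k. X n k - X j k) (Sf t) / real (m t)) \<le> e\<^sup>2"
        proof (intro allI impI)
          fix j assume j: "j \<ge> M"
          have DL: "(\<lambda>k. X n k - X j k) \<in> LF" by (rule LF_diff[OF XL XL])
          have "(\<Sum>t<R. sqs (\<lambda>k. X n k - X j k) (Sf t) / real (m t)) \<le> (\<Sum>t<R. \<tau> t (\<lambda>k. X n k - X j k))"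
            by (intro sum_mono tau_upper LF_linf[OF DL]) (use Sf in auto)
          also have "\<dots> \<le> (NF (\<lambda>k. X n k - X j k))\<^sup>2" by (rule partial_tau_le_NF[OF DL])
          also have "\<dots> \<le> e\<^sup>2" using M n j NF_nonneg[OF DL] by (intro power_mono) (auto simp: less_imp_le)
          finally show "(\<Sum>t<R. sqs (\<lambda>k. X n k - X j k) (Sf t) / real (m t)) \<le> e\<^sup>2" .
        qed
        then show "(\<Sum>t<R. sqs d (Sf t) / real (m t)) \<le> e\<^sup>2" by (intro LIMSEQ_le_const2[OF lim]) auto
      qed
      have sd: "summable (\<lambda>t. \<tau> t d)"
        by (rule summableI_nonneg_bounded[where x="e\<^sup>2"]) (use tau_nonneg[OF dl] part in auto)
      have dL: "d \<in> LF" unfolding LFs_def using dl sd by simp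
      have "(\<Sum>t. \<tau> t d) \<le> e\<^sup>2" by (rule suminf_le_const[OF sd part])
      then have "NF d \<le> sqrt (e\<^sup>2)" unfolding NFs_def by (rule real_sqrt_le_mono)
      then have "NF d \<le> e" using e by simp
      then show ?thesis using dL unfolding d_def by (simp add: d_def[abs_def])
    qed
    then show ?thesis by blast
  qed
  obtain M1 where M1: "\<forall>n\<ge>M1. (\<lambda>k. X n k - x k) \<in> LF \<and> NF (\<lambda>k. X n k - x k) \<le> 1" using claim[of 1] by auto
  have "(\<lambda>k. X M1 k - x k) \<in> LF" using M1 by auto
  then have "(\<lambda>k. X M1 k - (X M1 k - x k)) \<in> LF" by (rule LF_diff[OF XL])
  then have xL: "x \<in> LF" by simp
  have "(\<lambda>n. NF (\<lambda>k. X n k - x k)) \<longlonglongrightarrow> 0"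
    unfolding LIMSEQ_iff
  proof (intro allI impI)
    fix r :: real assume r: "r > 0"
    obtain M where M: "\<forall>n\<ge>M. (\<lambda>k. X n k - x k) \<in> LF \<and> NF (\<lambda>k. X n k - x k) \<le> r/2" using claim[of "r/2"] r by auto
    have "\<forall>n\<ge>M. norm (NF (\<lambda>k. X n k - x k) - 0) < r"
    proof (intro allI impI)
      fix n assume "n \<ge> M"
      then have "(\<lambda>k. X n k - x k) \<in> LF" "NF (\<lambda>k. X n k - x k) \<le> r/2" using M by auto
      then show "norm (NF (\<lambda>k. X n k - x k) - 0) < r" using NF_nonneg r by simp
    qed
    then show "\<exists>no. \<forall>n\<ge>no. norm (NF (\<lambda>k. X n k - x k) - 0) < r" by blast
  qed
  then show "\<exists>x\<in>LF. (\<lambda>n. NF (\<lambda>k. X n k - x k)) \<longlonglongrightarrow> 0" using xL by blast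
qed

end

definition ev :: "seq set \<Rightarrow> nat \<Rightarrow> seq \<Rightarrow> real" where
  "ev L k = (\<lambda>x. if x \<in> L then x k else 0)"

definition unit :: "nat \<Rightarrow> seq" where
  "unit k = (\<lambda>j. if j = k then 1 else 0)"

definition trunc :: "nat \<Rightarrow> seq \<Rightarrow> seq" where
  "trunc n x = (\<lambda>j. if j < n then x j else 0)"

definition tail :: "nat \<Rightarrow> seq \<Rightarrow> seq" where
  "tail n x = (\<lambda>j. if j < n then 0 else x j)"

locale wts = wt +
  assumes m_sum: "summable (\<lambda>t. 1 / real (m t))"
begin

lemma LF_mono: assumes "x \<in> LF" "\<forall>k. \<bar>y k\<bar> \<le> \<bar>x k\<bar>" shows "y \<in> LF \<and> NF y \<le> NF x"
proof -
  have lx: "x \<in> linf" using LF_linf[OF assms(1)] .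
  have ly: "y \<in> linf" by (rule linf_mono[OF lx assms(2)])
  have h: "norm (\<tau> t y) \<le> \<tau> t x" for t using tau_mono[OF lx assms(2)] tau_nonneg[OF ly] by simp
  have sy: "summable (\<lambda>t. \<tau> t y)" by (rule summable_comparison_test'[where N=0, OF LF_summable[OF assms(1)] h])
  then have yL: "y \<in> LF" unfolding LFs_def using ly by simp
  have "(\<Sum>t. \<tau> t y) \<le> (\<Sum>t. \<tau> t x)" by (rule suminf_le[OF _ sy LF_summable[OF assms(1)]]) (use tau_mono[OF lx assms(2)] in auto)
  then have "NF y \<le> NF x" unfolding NFs_def by simp
  then show ?thesis using yL by simp
qed

lemma finsupp_LF: assumes "finite K" "\<forall>k. k \<notin> K \<longrightarrow> x k = 0" shows "x \<in> LF"
proof -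
  define B where "B = Max (insert 0 ((\<lambda>k. \<bar>x k\<bar>) ` K))"
  have B: "\<bar>x k\<bar> \<le> B" for k
    using assms unfolding B_def by (cases "k \<in> K") (auto intro: Max_ge)
  then have lx: "x \<in> linf" unfolding linf_def by blast
  have h: "norm (\<tau> t x) \<le> sqs x K * (1 / real (m t))" for t
  proof -
    have "\<tau> t x \<le> sqs x K / real (m t)"
    proof (rule tau_least)
      fix S :: "nat set" assume S: "finite S" "card S \<le> m t"
      have "sqs x S = sqs x (S \<inter> K)" unfolding sqs_def using assms S
        by (intro sum.mono_neutral_right) auto
      also have "\<dots> \<le> sqs x K" unfolding sqs_def using assms
        by (intro sum_mono2) auto
      finally show "sqs x S / real (m t) \<le> sqs x K / real (m t)" by (simp add: divide_right_mono)
    qed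
    then show ?thesis using tau_nonneg[OF lx] by simp
  qed
  have "summable (\<lambda>t. \<tau> t x)" by (rule summable_comparison_test'[where N=0, OF summable_mult[OF m_sum] h])
  then show ?thesis unfolding LFs_def using lx by simp
qed

lemma unit_LF: "unit k \<in> LF"
  by (rule finsupp_LF[of "{k}"]) (auto simp: unit_def)

lemma trunc_LF: "trunc n x \<in> LF"
  by (rule finsupp_LF[of "{..<n}"]) (auto simp: trunc_def)

lemma tail_LF: assumes "x \<in> LF" shows "tail n x \<in> LF" "NF (tail n x) \<le> NF x"
  using LF_mono[OF assms, of "tail n x"] by (auto simp: tail_def)

lemma trunc_sum: "trunc n x = (\<lambda>j. \<Sum>k<n. x k * unit k j)"
  unfolding trunc_def unit_def by (auto simp: if_distrib cong: if_cong)

lemma x_split: "x = (\<lambda>j. trunc n x j + tail n x j)"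
  unfolding trunc_def tail_def by auto

abbreviation "DS \<equiv> dual_space LF NF"

lemma dual_add: "f \<in> DS \<Longrightarrow> x \<in> LF \<Longrightarrow> y \<in> LF \<Longrightarrow> f (\<lambda>k. x k + y k) = f x + f y"
  unfolding dual_space_def by blast

lemma dual_scale: "f \<in> DS \<Longrightarrow> x \<in> LF \<Longrightarrow> f (\<lambda>k. c * x k) = c * f x"
  unfolding dual_space_def by blast

lemma dual_out: "f \<in> DS \<Longrightarrow> x \<notin> LF \<Longrightarrow> f x = 0"
  unfolding dual_space_def by blast

lemma dual_zero: assumes "f \<in> DS" shows "f (\<lambda>k. 0) = 0"
  using dual_scale[OF assms LF_zero, of 0] by simp

lemma dual_C: assumes "f \<in> DS" shows "\<exists>C\<ge>0. \<forall>x\<in>LF. \<bar>f x\<bar> \<le> C * NF x"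
proof -
  obtain C where C: "\<forall>x\<in>LF. \<bar>f x\<bar> \<le> C * NF x" using assms unfolding dual_space_def by blast
  have "\<forall>x\<in>LF. \<bar>f x\<bar> \<le> max C 0 * NF x"
  proof
    fix x assume "x \<in> LF"
    then have "\<bar>f x\<bar> \<le> C * NF x" "0 \<le> NF x" using C NF_nonneg by auto
    then show "\<bar>f x\<bar> \<le> max C 0 * NF x" by (meson max.cobounded1 mult_right_mono order_trans)
  qed
  then show ?thesis by (intro exI[of _ "max C 0"]) auto
qed

lemma dual_diff: "f \<in> DS \<Longrightarrow> x \<in> LF \<Longrightarrow> y \<in> LF \<Longrightarrow> f (\<lambda>k. x k - y k) = f x - f y"
  using dual_add[of f x "\<lambda>k. -1 * y k"] dual_scale[of f y "-1"] LF_scale[of y "-1"] by simp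

lemma dual_sum: assumes "f \<in> DS" "finite I" "\<forall>p\<in>I. u p \<in> LF"
  shows "(\<lambda>j. \<Sum>p\<in>I. a p * u p j) \<in> LF \<and> f (\<lambda>j. \<Sum>p\<in>I. a p * u p j) = (\<Sum>p\<in>I. a p * f (u p))"
  using assms(2,3)
proof (induction I rule: finite_induct)
  case empty
  then show ?case using LF_zero dual_zero[OF assms(1)] by simp
next
  case (insert q I)
  then have IH: "(\<lambda>j. \<Sum>p\<in>I. a p * u p j) \<in> LF" "f (\<lambda>j. \<Sum>p\<in>I. a p * u p j) = (\<Sum>p\<in>I. a p * f (u p))"
    and uq: "u q \<in> LF" by auto
  have eq: "(\<lambda>j. \<Sum>p\<in>insert q I. a p * u p j) = (\<lambda>j. a q * u q j + (\<Sum>p\<in>I. a p * u p j))"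
    using insert by simp
  have m1: "(\<lambda>j. a q * u q j) \<in> LF" by (rule LF_scale[OF uq])
  show ?case unfolding eq
    using LF_add[OF m1 IH(1)] dual_add[OF assms(1) m1 IH(1)] dual_scale[OF assms(1) uq] IH(2) insert by simp
qed

lemma dual_add_mem: assumes "f \<in> DS" "g \<in> DS" shows "(\<lambda>x. f x + g x) \<in> DS"
proof -
  obtain C1 where C1: "C1 \<ge> 0" "\<forall>x\<in>LF. \<bar>f x\<bar> \<le> C1 * NF x" using dual_C[OF assms(1)] by blast
  obtain C2 where C2: "C2 \<ge> 0" "\<forall>x\<in>LF. \<bar>g x\<bar> \<le> C2 * NF x" using dual_C[OF assms(2)] by blast
  have "\<forall>x\<in>LF. \<bar>f x + g x\<bar> \<le> (C1 + C2) * NF x"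
  proof
    fix x assume "x \<in> LF"
    then have "\<bar>f x\<bar> \<le> C1 * NF x" "\<bar>g x\<bar> \<le> C2 * NF x" using C1 C2 by auto
    then show "\<bar>f x + g x\<bar> \<le> (C1 + C2) * NF x" by (simp add: distrib_right abs_triangle_ineq order_trans[OF abs_triangle_ineq])
  qed
  then show ?thesis unfolding dual_space_def mem_Collect_eq
  proof (intro conjI)
    show "\<forall>x\<in>LF. \<forall>y\<in>LF. f (\<lambda>k. x k + y k) + g (\<lambda>k. x k + y k) = f x + g x + (f y + g y)"
      using dual_add[OF assms(1)] dual_add[OF assms(2)] by simp
    show "\<forall>c. \<forall>x\<in>LF. f (\<lambda>k. c * x k) + g (\<lambda>k. c * x k) = c * (f x + g x)"
      using dual_scale[OF assms(1)] dual_scale[OF assms(2)] by (simp add: distrib_left)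
    show "\<forall>x. x \<notin> LF \<longrightarrow> f x + g x = 0" using dual_out[OF assms(1)] dual_out[OF assms(2)] by simp
  qed blast
qed

lemma dual_scale_mem: assumes "f \<in> DS" shows "(\<lambda>x. c * f x) \<in> DS"
proof -
  obtain C1 where C1: "C1 \<ge> 0" "\<forall>x\<in>LF. \<bar>f x\<bar> \<le> C1 * NF x" using dual_C[OF assms(1)] by blast
  have "\<forall>x\<in>LF. \<bar>c * f x\<bar> \<le> (\<bar>c\<bar> * C1) * NF x"
  proof
    fix x assume "x \<in> LF"
    then have "\<bar>f x\<bar> \<le> C1 * NF x" using C1 by auto
    then show "\<bar>c * f x\<bar> \<le> (\<bar>c\<bar> * C1) * NF x" by (simp add: abs_mult mult.assoc mult_left_mono)
  qed
  then show ?thesis unfolding dual_space_def mem_Collect_eq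
  proof (intro conjI)
    show "\<forall>x\<in>LF. \<forall>y\<in>LF. c * f (\<lambda>k. x k + y k) = c * f x + c * f y"
      using dual_add[OF assms(1)] by (simp add: distrib_left)
    show "\<forall>d. \<forall>x\<in>LF. c * f (\<lambda>k. d * x k) = d * (c * f x)"
      using dual_scale[OF assms(1)] by simp
    show "\<forall>x. x \<notin> LF \<longrightarrow> c * f x = 0" using dual_out[OF assms(1)] by simp
  qed blast
qed

lemma dual_zero_mem: "(\<lambda>x. 0) \<in> DS"
  unfolding dual_space_def mem_Collect_eq by (intro conjI exI[of _ 0]) simp_all

lemma ev_mem: "ev LF k \<in> DS"
proof -
  have "\<forall>x\<in>LF. \<bar>ev LF k x\<bar> \<le> sqrt (real (m 0)) * NF x" unfolding ev_def using coord_le_NF by auto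
  then show ?thesis unfolding dual_space_def mem_Collect_eq
  proof (intro conjI)
    show "\<forall>x\<in>LF. \<forall>y\<in>LF. ev LF k (\<lambda>k. x k + y k) = ev LF k x + ev LF k y"
      unfolding ev_def using LF_add by simp
    show "\<forall>c. \<forall>x\<in>LF. ev LF k (\<lambda>k. c * x k) = c * ev LF k x"
      unfolding ev_def using LF_scale by simp
    show "\<forall>x. x \<notin> LF \<longrightarrow> ev LF k x = 0" unfolding ev_def by simp
  qed blast
qed

lemma dual_lincomb_mem: assumes "finite I" "\<forall>p\<in>I. h p \<in> DS" shows "(\<lambda>x. \<Sum>p\<in>I. a p * h p x) \<in> DS"
  using assms
proof (induction I rule: finite_induct)
  case empty
  then show ?case using dual_zero_mem by simp
next
  case (insert q I)
  then have "(\<lambda>x. a q * h q x + (\<Sum>p\<in>I. a p * h p x)) \<in> DS"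
    using dual_add_mem[OF dual_scale_mem[of "h q" "a q"]] by simp
  then show ?case using insert by simp
qed

lemma Phi_lincomb:
  assumes add: "\<forall>f\<in>DS. \<forall>g\<in>DS. \<Phi> (\<lambda>x. f x + g x) = \<Phi> f + \<Phi> g"
    and sc: "\<forall>c. \<forall>f\<in>DS. \<Phi> (\<lambda>x. c * f x) = c * \<Phi> f"
    and "finite I" "\<forall>p\<in>I. h p \<in> DS"
  shows "\<Phi> (\<lambda>x. \<Sum>p\<in>I. a p * h p x) = (\<Sum>p\<in>I. a p * \<Phi> (h p))"
  using assms(3,4)
proof (induction I rule: finite_induct)
  case empty
  have "\<Phi> (\<lambda>x. 0 * 0) = 0 * \<Phi> (\<lambda>x. 0)" using sc[rule_format, where c=0 and f="\<lambda>x. 0", OF dual_zero_mem] by simp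
  then show ?case by simp
next
  case (insert q I)
  have m1: "(\<lambda>x. a q * h q x) \<in> DS" using insert dual_scale_mem[of "h q" "a q"] by simp
  have m2: "(\<lambda>x. \<Sum>p\<in>I. a p * h p x) \<in> DS" using insert dual_lincomb_mem[of I h a] by simp
  have "\<Phi> (\<lambda>x. \<Sum>p\<in>insert q I. a p * h p x) = \<Phi> (\<lambda>x. (\<lambda>x. a q * h q x) x + (\<lambda>x. \<Sum>p\<in>I. a p * h p x) x)"
    using insert by simp
  also have "\<dots> = \<Phi> (\<lambda>x. a q * h q x) + \<Phi> (\<lambda>x. \<Sum>p\<in>I. a p * h p x)"
    by (rule add[rule_format, OF m1 m2])
  also have "\<Phi> (\<lambda>x. a q * h q x) = a q * \<Phi> (h q)" using sc[rule_format, where c="a q" and f="h q"] insert by simp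
  finally show ?case using insert by simp
qed

lemma dual_norm_le: assumes "B \<ge> 0" "\<forall>x\<in>LF. NF x \<le> 1 \<longrightarrow> \<bar>f x\<bar> \<le> B"
  shows "dual_norm LF NF f \<le> B"
  unfolding dual_norm_def
proof (rule cSup_least)
  have "\<bar>f (\<lambda>k. 0)\<bar> \<in> {\<bar>f x\<bar> |x. x \<in> LF \<and> NF x \<le> 1}"
    using LF_zero NF_zero by (intro CollectI exI[of _ "\<lambda>k. 0"]) simp
  then show "{\<bar>f x\<bar> |x. x \<in> LF \<and> NF x \<le> 1} \<noteq> {}" by (rule ex_in_conv[THEN iffD1, OF exI])
  fix y assume "y \<in> {\<bar>f x\<bar> |x. x \<in> LF \<and> NF x \<le> 1}"
  then obtain x where "y = \<bar>f x\<bar>" "x \<in> LF" "NF x \<le> 1" by blast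
  then show "y \<le> B" using assms(2) by simp
qed

end

context wts begin

lemma order_cont: assumes "x \<in> LF" "\<epsilon> > 0" shows "\<exists>N. \<forall>n\<ge>N. NF (tail n x) \<le> \<epsilon>"
proof -
  have lx: "x \<in> linf" using LF_linf[OF assms(1)] .
  define s where "s = (\<Sum>t. \<tau> t x)"
  have e2: "\<epsilon>\<^sup>2 / 2 > 0" using assms by simp
  obtain R0 where R0: "\<forall>n\<ge>R0. norm ((\<Sum>t<n. \<tau> t x) - s) < \<epsilon>\<^sup>2 / 2"
    using summable_LIMSEQ[OF LF_summable[OF assms(1)]] e2 unfolding LIMSEQ_iff s_def by blast
  then have "norm ((\<Sum>t<R0. \<tau> t x) - s) < \<epsilon>\<^sup>2 / 2" by blast
  then have R0': "s - (\<Sum>t<R0. \<tau> t x) \<le> \<epsilon>\<^sup>2 / 2" unfolding real_norm_def by linarith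
  define \<beta> where "\<beta> = \<epsilon> / sqrt (2 * (real R0 + 1))"
  have \<beta>0: "\<beta> > 0" unfolding \<beta>_def using assms by simp
  have \<beta>2: "\<beta>\<^sup>2 = \<epsilon>\<^sup>2 / (2 * (real R0 + 1))" unfolding \<beta>_def by (simp add: power_divide)
  obtain N where N: "\<forall>k\<ge>N. norm (x k - 0) < \<beta>" using LF_c0[OF assms(1)] \<beta>0 unfolding LIMSEQ_iff by blast
  have "NF (tail n x) \<le> \<epsilon>" if n: "n \<ge> N" for n
  proof -
    define y where "y = tail n x"
    have yb: "\<forall>k. \<bar>y k\<bar> \<le> \<beta>"
    proof
      fix k show "\<bar>y k\<bar> \<le> \<beta>" using N n \<beta>0 unfolding y_def tail_def by (cases "k < n") (auto simp: less_imp_le)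
    qed
    have yx: "\<forall>k. \<bar>y k\<bar> \<le> \<bar>x k\<bar>" unfolding y_def tail_def by auto
    have yL: "y \<in> LF" using tail_LF[OF assms(1)] y_def by simp
    have sy: "summable (\<lambda>t. \<tau> t y)" by (rule LF_summable[OF yL])
    have "(\<Sum>t. \<tau> t y) = (\<Sum>t. \<tau> (t + R0) y) + (\<Sum>t<R0. \<tau> t y)" by (rule suminf_split_initial_segment[OF sy])
    also have "(\<Sum>t<R0. \<tau> t y) \<le> (\<Sum>t<R0. \<beta>\<^sup>2)" by (intro sum_mono tau_le_bound yb)
    also have "(\<Sum>t. \<tau> (t + R0) y) \<le> (\<Sum>t. \<tau> (t + R0) x)"
      by (intro suminf_le summable_ignore_initial_segment sy LF_summable[OF assms(1)] tau_mono[OF lx yx])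
    also have "(\<Sum>t. \<tau> (t + R0) x) = s - (\<Sum>t<R0. \<tau> t x)"
      unfolding s_def by (rule suminf_minus_initial_segment[OF LF_summable[OF assms(1)]])
    finally have "(\<Sum>t. \<tau> t y) \<le> \<epsilon>\<^sup>2 / 2 + real R0 * \<beta>\<^sup>2" using R0' by simp
    also have "real R0 * \<beta>\<^sup>2 \<le> \<epsilon>\<^sup>2 / 2" unfolding \<beta>2
      using assms(2) by (simp add: field_simps)
    finally have "(\<Sum>t. \<tau> t y) \<le> \<epsilon>\<^sup>2" by simp
    then have "NF y \<le> sqrt (\<epsilon>\<^sup>2)" unfolding NFs_def by (rule real_sqrt_le_mono)
    then show ?thesis using assms(2) y_def by simp
  qed
  then show ?thesis by blast
qed

lemma block: assumes f: "f \<in> DS" and C: "C \<ge> 0" "\<forall>x\<in>LF. \<bar>f x\<bar> \<le> C * NF x" and e: "\<epsilon> > 0"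
  and x: "x \<in> LF" "NF x \<le> 1" "\<bar>f (tail N x)\<bar> > \<epsilon>"
  shows "\<exists>M y. N \<le> M \<and> y \<in> LF \<and> NF y \<le> 1 \<and> (\<forall>j. (j < N \<or> M \<le> j) \<longrightarrow> y j = 0) \<and> f y > \<epsilon> / 2"
proof -
  define w where "w = tail N x"
  have wL: "w \<in> LF" unfolding w_def by (rule tail_LF[OF x(1)])
  define \<delta> where "\<delta> = \<epsilon> / (2 * (C + 1))"
  have \<delta>0: "\<delta> > 0" unfolding \<delta>_def using e C by simp
  obtain M0 where M0: "\<forall>n\<ge>M0. NF (tail n w) \<le> \<delta>" using order_cont[OF wL \<delta>0] by blast
  define M where "M = max N M0"
  have tM: "NF (tail M w) \<le> \<delta>" using M0 M_def by simp
  have tML: "tail M w \<in> LF" by (rule tail_LF[OF wL])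
  have "\<bar>f (tail M w)\<bar> \<le> C * \<delta>" using C(2) tML tM C(1) by (meson mult_left_mono order_trans)
  also have "C * \<delta> < \<epsilon> / 2" unfolding \<delta>_def using e C by (simp add: field_simps)
  finally have small: "\<bar>f (tail M w)\<bar> < \<epsilon> / 2" .
  define y0 where "y0 = (\<lambda>j. w j - tail M w j)"
  have y0L: "y0 \<in> LF" unfolding y0_def by (rule LF_diff[OF wL tML])
  have fy0: "f y0 = f w - f (tail M w)" unfolding y0_def by (rule dual_diff[OF f wL tML])
  have "\<bar>f w\<bar> > \<epsilon>" using x(3) w_def by simp
  then have big: "\<bar>f y0\<bar> > \<epsilon> / 2" using fy0 small by linarith
  have y0x: "\<forall>k. \<bar>y0 k\<bar> \<le> \<bar>x k\<bar>" unfolding y0_def w_def tail_def by auto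
  have NFy0: "NF y0 \<le> 1" using LF_mono[OF x(1) y0x] x(2) by linarith
  have supp: "\<forall>j. (j < N \<or> M \<le> j) \<longrightarrow> y0 j = 0" unfolding y0_def w_def tail_def M_def by auto
  define c :: real where "c = (if f y0 > 0 then 1 else -1)"
  define y where "y = (\<lambda>j. c * y0 j)"
  have yL: "y \<in> LF" unfolding y_def by (rule LF_scale[OF y0L])
  have "NF y = NF y0" unfolding y_def using NF_scale[OF y0L, of c] by (simp add: c_def)
  moreover have "f y = \<bar>f y0\<bar>" unfolding y_def using dual_scale[OF f y0L, of c] by (simp add: c_def)
  moreover have "\<forall>j. (j < N \<or> M \<le> j) \<longrightarrow> y j = 0" using supp unfolding y_def by simp
  ultimately show ?thesis using yL NFy0 big M_def by (intro exI[of _ M] exI[of _ y]) auto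
qed

lemma shrink: assumes f: "f \<in> DS" and e: "\<epsilon> > 0"
  shows "\<exists>N. \<forall>x\<in>LF. NF x \<le> 1 \<longrightarrow> \<bar>f (tail N x)\<bar> \<le> \<epsilon>"
proof (rule ccontr)
  assume "\<not> ?thesis"
  then have H: "\<forall>N. \<exists>x\<in>LF. NF x \<le> 1 \<and> \<bar>f (tail N x)\<bar> > \<epsilon>" by (auto simp: not_le)
  obtain C where C: "C \<ge> 0" "\<forall>x\<in>LF. \<bar>f x\<bar> \<le> C * NF x" using dual_C[OF f] by blast
  have "\<forall>N. \<exists>M y. N \<le> M \<and> y \<in> LF \<and> NF y \<le> 1 \<and> (\<forall>j. (j < N \<or> M \<le> j) \<longrightarrow> y j = 0) \<and> f y > \<epsilon> / 2"
  proof
    fix N obtain x where "x \<in> LF" "NF x \<le> 1" "\<bar>f (tail N x)\<bar> > \<epsilon>" using H by blast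
    then show "\<exists>M y. N \<le> M \<and> y \<in> LF \<and> NF y \<le> 1 \<and> (\<forall>j. (j < N \<or> M \<le> j) \<longrightarrow> y j = 0) \<and> f y > \<epsilon> / 2"
      by (rule block[OF f C e])
  qed
  then obtain Mf yf where MY: "\<And>N. N \<le> Mf N \<and> yf N \<in> LF \<and> NF (yf N) \<le> 1 \<and> (\<forall>j. (j < N \<or> Mf N \<le> j) \<longrightarrow> yf N j = 0) \<and> f (yf N) > \<epsilon> / 2"
    by metis
  define Nb where "Nb j = (Mf ^^ j) 0" for j
  have NbS: "Nb (Suc j) = Mf (Nb j)" for j unfolding Nb_def by simp
  have inc: "incseq Nb" by (rule incseq_SucI) (use MY NbS in auto)
  define Y where "Y j = yf (Nb j)" for j
  have YL: "Y j \<in> LF" for j using MY Y_def by auto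
  have YN: "NF (Y j) \<le> 1" for j using MY Y_def by auto
  have Yf: "f (Y j) > \<epsilon> / 2" for j using MY Y_def by auto
  have Ysupp: "Y j k = 0" if "k < Nb j \<or> Nb (Suc j) \<le> k" for j k using MY[of "Nb j"] that NbS Y_def by auto
  define Sr where "Sr r = (\<lambda>k. \<Sum>j<r. 1 * Y j k)" for r
  have SrL: "Sr r \<in> LF" and fSr: "f (Sr r) = (\<Sum>j<r. 1 * f (Y j))" for r
    using dual_sum[OF f, of "{..<r}" Y "\<lambda>_. 1"] YL unfolding Sr_def by auto
  have fSr_ge: "f (Sr r) \<ge> real r * (\<epsilon> / 2)" for r
  proof -
    have "(\<Sum>j<r. \<epsilon> / 2) \<le> (\<Sum>j<r. 1 * f (Y j))" by (intro sum_mono) (use Yf less_imp_le in auto)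
    then show ?thesis using fSr by simp
  qed
  have sq: "(Sr r k)\<^sup>2 = (\<Sum>j<r. (Y j k)\<^sup>2)" for r k
  proof (induction r)
    case 0
    then show ?case by (simp add: Sr_def)
  next
    case (Suc r)
    have cross: "Sr r k * Y r k = 0"
    proof (cases "Y r k = 0")
      case False
      then have kb: "Nb r \<le> k" using Ysupp[of k r] not_le by blast
      have "Y j k = 0" if "j < r" for j
      proof -
        have "Nb (Suc j) \<le> Nb r" using inc that by (simp add: incseq_def)
        then show ?thesis using Ysupp[of k j] kb by simp
      qed
      then have "Sr r k = 0" unfolding Sr_def by simp
      then show ?thesis by simp
    qed simp
    have "Sr (Suc r) k = Sr r k + Y r k" unfolding Sr_def by simp
    then have "(Sr (Suc r) k)\<^sup>2 = (Sr r k)\<^sup>2 + 2 * (Sr r k * Y r k) + (Y r k)\<^sup>2" by (simp add: power2_sum)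
    then show ?case using Suc cross by simp
  qed
  have tauSr: "\<tau> t (Sr r) \<le> (\<Sum>j<r. \<tau> t (Y j))" for t r
  proof (rule tau_least)
    fix S :: "nat set" assume S: "finite S" "card S \<le> m t"
    have "sqs (Sr r) S = (\<Sum>k\<in>S. \<Sum>j<r. (Y j k)\<^sup>2)" unfolding sqs_def using sq by simp
    also have "\<dots> = (\<Sum>j<r. sqs (Y j) S)" unfolding sqs_def by (rule sum.swap)
    finally have "sqs (Sr r) S / real (m t) = (\<Sum>j<r. sqs (Y j) S / real (m t))" by (simp add: sum_divide_distrib)
    also have "\<dots> \<le> (\<Sum>j<r. \<tau> t (Y j))" by (intro sum_mono tau_upper LF_linf[OF YL] S)
    finally show "sqs (Sr r) S / real (m t) \<le> (\<Sum>j<r. \<tau> t (Y j))" .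
  qed
  have NFSr: "(NF (Sr r))\<^sup>2 \<le> real r" for r
  proof -
    have s1: "summable (\<lambda>t. \<Sum>j<r. \<tau> t (Y j))" by (rule summable_sum) (use LF_summable[OF YL] in auto)
    have "(NF (Sr r))\<^sup>2 = (\<Sum>t. \<tau> t (Sr r))" by (rule NF_sq[OF SrL])
    also have "\<dots> \<le> (\<Sum>t. \<Sum>j<r. \<tau> t (Y j))" by (rule suminf_le[OF tauSr LF_summable[OF SrL] s1])
    also have "\<dots> = (\<Sum>j<r. \<Sum>t. \<tau> t (Y j))" by (rule suminf_sum) (use LF_summable[OF YL] in auto)
    also have "\<dots> = (\<Sum>j<r. (NF (Y j))\<^sup>2)" using NF_sq[OF YL] by simp
    also have "\<dots> \<le> (\<Sum>j<r. 1)"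
    proof (rule sum_mono)
      fix j show "(NF (Y j))\<^sup>2 \<le> 1" using YN[of j] NF_nonneg[OF YL, of j] by (intro power_le_one) auto
    qed
    finally show ?thesis by simp
  qed
  define r where "r = nat \<lceil>(2 * C / \<epsilon>)\<^sup>2\<rceil> + 1"
  define q where "q = sqrt (real r)"
  have "r \<ge> 1" unfolding r_def by simp
  then have q0: "q > 0" unfolding q_def by simp
  have "(2 * C / \<epsilon>)\<^sup>2 < real r" unfolding r_def by linarith
  then have "sqrt ((2 * C / \<epsilon>)\<^sup>2) < q" unfolding q_def by (rule real_sqrt_less_mono)
  then have "2 * C / \<epsilon> < q" using C e by simp
  then have "C < q * (\<epsilon> / 2)" using e by (simp add: field_simps)
  then have lt: "C * q < q * q * (\<epsilon> / 2)" using q0 by (simp add: mult.commute mult.left_commute)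
  have rq: "real r = q * q" unfolding q_def by simp
  have "NF (Sr r) \<le> q" unfolding q_def using NFSr[of r] NF_nonneg[OF SrL]
    by (metis real_sqrt_le_mono real_sqrt_abs abs_of_nonneg power2_eq_square)
  then have "C * NF (Sr r) \<le> C * q" using C(1) by (rule mult_left_mono)
  moreover have "\<bar>f (Sr r)\<bar> \<le> C * NF (Sr r)" using C(2) SrL by blast
  ultimately have "f (Sr r) \<le> C * q" by linarith
  moreover have "f (Sr r) \<ge> q * q * (\<epsilon> / 2)" using fSr_ge[of r] rq by simp
  ultimately show False using lt by simp
qed

end

context wts begin

lemma dual_norm_nonneg: assumes "f \<in> DS" shows "0 \<le> dual_norm LF NF f"
proof -
  obtain C where C: "C \<ge> 0" "\<forall>x\<in>LF. \<bar>f x\<bar> \<le> C * NF x" using dual_C[OF assms] by blast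
  have bdd: "bdd_above {\<bar>f x\<bar> |x. x \<in> LF \<and> NF x \<le> 1}"
  proof (rule bdd_aboveI)
    fix y assume "y \<in> {\<bar>f x\<bar> |x. x \<in> LF \<and> NF x \<le> 1}"
    then obtain x where x: "y = \<bar>f x\<bar>" "x \<in> LF" "NF x \<le> 1" by blast
    then have "y \<le> C * NF x" using C by simp
    also have "\<dots> \<le> C * 1" using x(3) C(1) by (rule mult_left_mono)
    finally show "y \<le> C" by simp
  qed
  have "\<bar>f (\<lambda>k. 0)\<bar> \<in> {\<bar>f x\<bar> |x. x \<in> LF \<and> NF x \<le> 1}"
    using LF_zero NF_zero by (intro CollectI exI[of _ "\<lambda>k. 0"]) simp
  then have "\<bar>f (\<lambda>k. 0)\<bar> \<le> dual_norm LF NF f" unfolding dual_norm_def by (rule cSup_upper[OF _ bdd])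
  then show ?thesis by (meson abs_ge_zero order_trans)
qed

lemma family_bound:
  assumes add: "\<forall>f\<in>DS. \<forall>g\<in>DS. \<Phi> (\<lambda>x. f x + g x) = \<Phi> f + \<Phi> g"
    and sc: "\<forall>c. \<forall>f\<in>DS. \<Phi> (\<lambda>x. c * f x) = c * \<Phi> f"
    and bd: "\<forall>f\<in>DS. \<bar>\<Phi> f\<bar> \<le> C0 * dual_norm LF NF f" and C0: "C0 \<ge> 0"
    and z: "\<And>k. z k = \<Phi> (ev LF k)"
    and Sf: "\<forall>t<R. finite (Sf t) \<and> card (Sf t) \<le> m t"
  shows "(\<Sum>t<R. sqs z (Sf t) / real (m t)) \<le> C0\<^sup>2"
proof -
  define I where "I = Sigma {..<R} Sf"
  have fI: "finite I" unfolding I_def using Sf by (intro finite_SigmaI) auto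
  define A where "A = (\<Sum>t<R. sqs z (Sf t) / real (m t))"
  have sig: "(\<Sum>p\<in>I. h (fst p) (snd p)) = (\<Sum>t<R. \<Sum>k\<in>Sf t. h t k)" for h :: "nat \<Rightarrow> nat \<Rightarrow> real"
    unfolding I_def using Sf by (subst sum.Sigma) (auto simp: case_prod_beta')
  have A_I: "A = (\<Sum>p\<in>I. (z (snd p))\<^sup>2 / real (m (fst p)))"
    unfolding A_def sqs_def sum_divide_distrib using sig[of "\<lambda>t k. (z k)\<^sup>2 / real (m t)"] by simp
  have A0: "A \<ge> 0" unfolding A_def by (intro sum_nonneg divide_nonneg_nonneg sqs_nonneg) auto
  define g where "g = (\<lambda>x. \<Sum>p\<in>I. (z (snd p) / real (m (fst p))) * ev LF (snd p) x)"
  have gD: "g \<in> DS" unfolding g_def by (rule dual_lincomb_mem[OF fI]) (use ev_mem in auto)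
  have Phig: "\<Phi> g = (\<Sum>p\<in>I. (z (snd p) / real (m (fst p))) * \<Phi> (ev LF (snd p)))"
    unfolding g_def by (rule Phi_lincomb[OF add sc fI]) (use ev_mem in auto)
  then have PhigA: "\<Phi> g = A" unfolding A_I z[symmetric] by (simp add: power2_eq_square)
  have gx: "\<bar>g x\<bar> \<le> sqrt A * NF x" if xL: "x \<in> LF" for x
  proof -
    define u where "u p = z (snd p) / sqrt (real (m (fst p)))" for p :: "nat \<times> nat"
    define v where "v p = x (snd p) / sqrt (real (m (fst p)))" for p :: "nat \<times> nat"
    have mp: "real (m t) > 0" for t using m_pos[of t] by simp
    have "g x = (\<Sum>p\<in>I. u p * v p)" unfolding g_def u_def v_def ev_def using xL mp
      by (intro sum.cong) (auto simp: real_sqrt_mult[symmetric])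
    then have "\<bar>g x\<bar> \<le> (\<Sum>p\<in>I. \<bar>u p\<bar> * \<bar>v p\<bar>)" by (simp add: order_trans[OF sum_abs] abs_mult)
    also have "\<dots> \<le> L2_set u I * L2_set v I" by (rule L2_set_mult_ineq)
    finally have l1: "\<bar>g x\<bar> \<le> L2_set u I * L2_set v I" .
    have l2: "L2_set u I = sqrt A" unfolding L2_set_def u_def A_I using mp by (simp add: power_divide)
    have l3: "L2_set v I \<le> NF x"
    proof -
      have "(\<Sum>p\<in>I. (v p)\<^sup>2) = (\<Sum>t<R. sqs x (Sf t) / real (m t))"
        unfolding v_def sqs_def sum_divide_distrib using mp sig[of "\<lambda>t k. (x k)\<^sup>2 / real (m t)"]
        by (simp add: power_divide)
      also have "\<dots> \<le> (\<Sum>t<R. \<tau> t x)" by (intro sum_mono tau_upper LF_linf[OF xL]) (use Sf in auto)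
      also have "\<dots> \<le> (NF x)\<^sup>2" by (rule partial_tau_le_NF[OF xL])
      finally have "L2_set v I \<le> sqrt ((NF x)\<^sup>2)" unfolding L2_set_def by (rule real_sqrt_le_mono)
      then show ?thesis using NF_nonneg[OF xL] by simp
    qed
    have "sqrt A * L2_set v I \<le> sqrt A * NF x" using l3 A0 by (intro mult_left_mono) auto
    then show ?thesis using l1 l2 by simp
  qed
  have "dual_norm LF NF g \<le> sqrt A"
  proof (rule dual_norm_le)
    show "0 \<le> sqrt A" using A0 by simp
    show "\<forall>x\<in>LF. NF x \<le> 1 \<longrightarrow> \<bar>g x\<bar> \<le> sqrt A"
    proof (intro ballI impI)
      fix x assume "x \<in> LF" "NF x \<le> 1"
      then have "sqrt A * NF x \<le> sqrt A * 1" using A0 by (intro mult_left_mono) auto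
      then show "\<bar>g x\<bar> \<le> sqrt A" using gx[OF \<open>x \<in> LF\<close>] by simp
    qed
  qed
  then have "C0 * dual_norm LF NF g \<le> C0 * sqrt A" using C0 by (rule mult_left_mono)
  then have "A \<le> C0 * sqrt A" using bd gD PhigA by fastforce
  then have "sqrt A * sqrt A \<le> C0 * sqrt A" using A0 by simp
  then have "sqrt A \<le> C0"
  proof (cases "sqrt A = 0")
    case False
    then have "sqrt A > 0" using A0 by simp
    show ?thesis by (rule mult_right_le_imp_le[OF \<open>sqrt A * sqrt A \<le> C0 * sqrt A\<close> \<open>sqrt A > 0\<close>])
  qed (use C0 in simp)
  then have "(sqrt A)\<^sup>2 \<le> C0\<^sup>2" using A0 by (intro power_mono) auto
  then show ?thesis using A0 A_def by simp
qed

lemma LF_reflexive: "reflexive_space LF NF"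
  unfolding reflexive_space_def
proof (intro allI impI)
  fix \<Phi> :: "(seq \<Rightarrow> real) \<Rightarrow> real"
  assume H: "(\<forall>f\<in>DS. \<forall>g\<in>DS. \<Phi> (\<lambda>x. f x + g x) = \<Phi> f + \<Phi> g) \<and>
    (\<forall>c. \<forall>f\<in>DS. \<Phi> (\<lambda>x. c * f x) = c * \<Phi> f) \<and> (\<exists>C. \<forall>f\<in>DS. \<bar>\<Phi> f\<bar> \<le> C * dual_norm LF NF f)"
  then have add: "\<forall>f\<in>DS. \<forall>g\<in>DS. \<Phi> (\<lambda>x. f x + g x) = \<Phi> f + \<Phi> g"
    and sc: "\<forall>c. \<forall>f\<in>DS. \<Phi> (\<lambda>x. c * f x) = c * \<Phi> f" by auto
  obtain C where C: "\<forall>f\<in>DS. \<bar>\<Phi> f\<bar> \<le> C * dual_norm LF NF f" using H by blast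
  define C0 where "C0 = max C 0"
  have C0: "C0 \<ge> 0" unfolding C0_def by simp
  have bd: "\<forall>f\<in>DS. \<bar>\<Phi> f\<bar> \<le> C0 * dual_norm LF NF f"
  proof
    fix f assume f: "f \<in> DS"
    have "C * dual_norm LF NF f \<le> C0 * dual_norm LF NF f" unfolding C0_def
      using dual_norm_nonneg[OF f] by (intro mult_right_mono) auto
    then show "\<bar>\<Phi> f\<bar> \<le> C0 * dual_norm LF NF f" using C f by fastforce
  qed
  define z where "z k = \<Phi> (ev LF k)" for k
  note fam = family_bound[OF add sc bd C0 z_def]
  have zb: "\<bar>z k\<bar> \<le> C0 * sqrt (real (m 0))" for k
  proof -
    have "(\<Sum>t<1. sqs z ((\<lambda>_. {k}) t) / real (m t)) \<le> C0\<^sup>2" by (rule fam) (use m_pos in auto)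
    then have "(z k)\<^sup>2 \<le> C0\<^sup>2 * real (m 0)" using m_pos[of 0] by (simp add: sqs_def divide_le_eq)
    then have "sqrt ((z k)\<^sup>2) \<le> sqrt (C0\<^sup>2 * real (m 0))" by (rule real_sqrt_le_mono)
    then show ?thesis using C0 by (simp add: real_sqrt_mult)
  qed
  have zl: "z \<in> linf" unfolding linf_def using zb by blast
  have part: "(\<Sum>t<R. \<tau> t z) \<le> C0\<^sup>2" for R
    by (rule tau_sum_le[OF zl]) (rule fam)
  have sz: "summable (\<lambda>t. \<tau> t z)"
    by (rule summableI_nonneg_bounded[where x="C0\<^sup>2"]) (use tau_nonneg[OF zl] part in auto)
  have zL: "z \<in> LF" unfolding LFs_def using zl sz by simp
  have "\<Phi> f = f z" if f: "f \<in> DS" for f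
  proof -
    obtain Cf where Cf: "Cf \<ge> 0" "\<forall>x\<in>LF. \<bar>f x\<bar> \<le> Cf * NF x" using dual_C[OF f] by blast
    have close: "\<bar>\<Phi> f - f z\<bar> \<le> (C0 + 1) * \<epsilon>" if e: "\<epsilon> > 0" for \<epsilon>
    proof -
      obtain N1 where N1: "\<forall>x\<in>LF. NF x \<le> 1 \<longrightarrow> \<bar>f (tail N1 x)\<bar> \<le> \<epsilon>" using shrink[OF f e] by blast
      have e': "\<epsilon> / (Cf + 1) > 0" using e Cf by simp
      obtain N2 where N2: "\<forall>n\<ge>N2. NF (tail n z) \<le> \<epsilon> / (Cf + 1)" using order_cont[OF zL e'] by blast
      define n where "n = max N1 N2"
      define a where "a k = f (unit k)" for k
      define fn where "fn = (\<lambda>x. \<Sum>k<n. a k * ev LF k x)"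
      have fnD: "fn \<in> DS" unfolding fn_def by (rule dual_lincomb_mem) (use ev_mem in auto)
      have Phifn: "\<Phi> fn = (\<Sum>k<n. a k * z k)" unfolding fn_def z_def
        by (rule Phi_lincomb[OF add sc]) (use ev_mem in auto)
      have ftrunc: "f (trunc n x) = (\<Sum>k<n. a k * x k)" for x
        using dual_sum[OF f, of "{..<n}" unit x] unit_LF unfolding trunc_sum a_def by (auto simp: mult.commute)
      have fnx: "fn x = f (trunc n x)" if "x \<in> LF" for x
        unfolding fn_def ftrunc ev_def using that by simp
      have ftail: "f x = f (trunc n x) + f (tail n x)" if "x \<in> LF" for x
      proof -
        have "f x = f (\<lambda>j. trunc n x j + tail n x j)" using x_split[of x n] by simp
        also have "\<dots> = f (trunc n x) + f (tail n x)" by (rule dual_add[OF f trunc_LF tail_LF(1)[OF that]])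
        finally show ?thesis .
      qed
      define hn where "hn = (\<lambda>x. f x + (-1) * fn x)"
      have hnD: "hn \<in> DS" unfolding hn_def by (rule dual_add_mem[OF f dual_scale_mem[OF fnD]])
      have Phihn: "\<Phi> hn = \<Phi> f - \<Phi> fn"
      proof -
        have "\<Phi> hn = \<Phi> f + \<Phi> (\<lambda>x. (-1) * fn x)" unfolding hn_def
          by (rule add[rule_format, OF f dual_scale_mem[OF fnD]])
        also have "\<Phi> (\<lambda>x. (-1) * fn x) = (-1) * \<Phi> fn" using sc[rule_format, where c="-1" and f=fn] fnD by simp
        finally show ?thesis by simp
      qed
      have hnx: "hn x = f (tail n x)" if "x \<in> LF" for x
        unfolding hn_def using fnx[OF that] ftail[OF that] by simp
      have "dual_norm LF NF hn \<le> \<epsilon>"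
      proof (rule dual_norm_le)
        show "0 \<le> \<epsilon>" using e by simp
        show "\<forall>x\<in>LF. NF x \<le> 1 \<longrightarrow> \<bar>hn x\<bar> \<le> \<epsilon>"
        proof (intro ballI impI)
          fix x assume x: "x \<in> LF" "NF x \<le> 1"
          have tL: "tail n x \<in> LF" "NF (tail n x) \<le> 1" using tail_LF[OF x(1), of n] x(2) by auto
          have "tail N1 (tail n x) = tail n x" unfolding tail_def n_def by (rule ext) auto
          then have "hn x = f (tail N1 (tail n x))" using hnx[OF x(1)] by simp
          then show "\<bar>hn x\<bar> \<le> \<epsilon>" using N1 tL by auto
        qed
      qed
      then have "C0 * dual_norm LF NF hn \<le> C0 * \<epsilon>" using C0 by (rule mult_left_mono)
      then have P1: "\<bar>\<Phi> hn\<bar> \<le> C0 * \<epsilon>" using bd hnD by fastforce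
      have "NF (tail n z) \<le> \<epsilon> / (Cf + 1)" using N2 n_def by simp
      then have "Cf * NF (tail n z) \<le> Cf * (\<epsilon> / (Cf + 1))" using Cf(1) by (rule mult_left_mono)
      also have "\<dots> \<le> \<epsilon>" using Cf(1) e by (simp add: field_simps)
      finally have P2: "\<bar>f (tail n z)\<bar> \<le> \<epsilon>" using Cf(2) tail_LF(1)[OF zL, of n] by fastforce
      have "f z = \<Phi> fn + f (tail n z)" using ftail[OF zL] ftrunc[of z] Phifn by (simp add: mult.commute)
      then have "\<Phi> f - f z = \<Phi> hn - f (tail n z)" using Phihn by simp
      then show ?thesis using P1 P2 by (simp add: distrib_right)
    qed
    show ?thesis
    proof (rule ccontr)
      assume ne: "\<Phi> f \<noteq> f z"
      define d where "d = \<bar>\<Phi> f - f z\<bar>"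
      have d0: "d > 0" using ne d_def by simp
      have "d / (2 * (C0 + 1)) > 0" using d0 C0 by simp
      then have "d \<le> (C0 + 1) * (d / (2 * (C0 + 1)))" unfolding d_def by (rule close)
      then show False using d0 C0 mult_nonneg_nonneg[OF C0 less_imp_le[OF d0]] by (simp add: field_simps)
    qed
  qed
  then show "\<exists>x\<in>LF. \<forall>f\<in>DS. \<Phi> f = f x" using zL by blast
qed

end

context wts begin

lemma LF_symmetric: "symmetric_seq_space LF NF"
  unfolding symmetric_seq_space_def
proof (intro conjI)
  show "lin_subspace LF" unfolding lin_subspace_def using LF_zero LF_add LF_scale by blast
  show "LF \<subseteq> linf" using LF_linf by blast
  show "is_norm_on LF NF" unfolding is_norm_on_def
  proof (intro conjI)
    show "\<forall>x\<in>LF. 0 \<le> NF x \<and> (NF x = 0) = (x = (\<lambda>k. 0))" using NF_nonneg NF_eq_0 NF_zero by auto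
    show "\<forall>c. \<forall>x\<in>LF. NF (\<lambda>k. c * x k) = \<bar>c\<bar> * NF x" using NF_scale by blast
    show "\<forall>x\<in>LF. \<forall>y\<in>LF. NF (\<lambda>k. x k + y k) \<le> NF x + NF y" using NF_triangle by blast
  qed
  show "complete_wrt LF NF" by (rule LF_complete)
  show "\<forall>x\<in>linf. \<forall>y\<in>LF. (\<forall>n. decr_rearr x n \<le> decr_rearr y n) \<longrightarrow> x \<in> LF \<and> NF x \<le> NF y"
    using LF_sym by blast
qed

end

definition ind :: "nat \<Rightarrow> seq" where
  "ind n = (\<lambda>j. if j < n then 1 else 0)"

lemma ind_linf: "(\<lambda>j. c * ind n j) \<in> linf"
  unfolding linf_def ind_def by (intro CollectI exI[of _ "\<bar>c\<bar>"]) auto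

lemma mu_le_ind: assumes "finite S" "card S \<le> n" "\<forall>k. k \<notin> S \<longrightarrow> x k = 0" "\<forall>k. \<bar>x k\<bar> \<le> c" "0 \<le> c"
  shows "mu x i \<le> mu (\<lambda>j. c * ind n j) i"
proof (cases "i < n")
  case True
  have "mu x i \<le> c" by (rule mu_le_bound[OF assms(4,5)])
  also have "c \<le> mu (\<lambda>j. c * ind n j) i"
    by (rule mu_ge[OF ind_linf, of "{..<n}"]) (use True assms(5) in \<open>auto simp: ind_def\<close>)
  finally show ?thesis .
next
  case False
  have "mu x i \<le> 0" by (rule mu_le_zero[OF assms(1) _ assms(3)]) (use False assms(2) in auto)
  also have "0 \<le> mu (\<lambda>j. c * ind n j) i" by (rule mu_nonneg[OF ind_linf])
  finally show ?thesis .
qed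

lemma ind_le_mu: assumes "y \<in> linf" "finite S" "card S = n" "\<forall>k\<in>S. c \<le> \<bar>y k\<bar>" "0 \<le> c"
  shows "mu (\<lambda>j. c * ind n j) i \<le> mu y i"
proof (cases "i < n")
  case True
  have "mu (\<lambda>j. c * ind n j) i \<le> c" by (rule mu_le_bound) (use assms(5) in \<open>auto simp: ind_def\<close>)
  also have "c \<le> mu y i" by (rule mu_ge[OF assms(1,2)]) (use True assms(3,4) in auto)
  finally show ?thesis .
next
  case False
  have "mu (\<lambda>j. c * ind n j) i \<le> 0" by (rule mu_le_zero[of "{..<n}"]) (use False in \<open>auto simp: ind_def\<close>)
  also have "0 \<le> mu y i" by (rule mu_nonneg[OF assms(1)])
  finally show ?thesis .
qed

locale symE =
  fixes LE :: "seq set" and NE :: "seq \<Rightarrow> real"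
  assumes sym: "symmetric_seq_space LE NE"
begin

lemma E_zero: "(\<lambda>k. 0) \<in> LE" using sym unfolding symmetric_seq_space_def lin_subspace_def by blast
lemma E_add: "x \<in> LE \<Longrightarrow> y \<in> LE \<Longrightarrow> (\<lambda>k. x k + y k) \<in> LE"
  using sym unfolding symmetric_seq_space_def lin_subspace_def by blast
lemma E_scale: "x \<in> LE \<Longrightarrow> (\<lambda>k. c * x k) \<in> LE"
  using sym unfolding symmetric_seq_space_def lin_subspace_def by blast
lemma E_linf: "x \<in> LE \<Longrightarrow> x \<in> linf" using sym unfolding symmetric_seq_space_def by blast
lemma E_nonneg: "x \<in> LE \<Longrightarrow> 0 \<le> NE x" using sym unfolding symmetric_seq_space_def is_norm_on_def by blast
lemma E_zero_iff: "x \<in> LE \<Longrightarrow> NE x = 0 \<longleftrightarrow> x = (\<lambda>k. 0)"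
  using sym unfolding symmetric_seq_space_def is_norm_on_def by blast
lemma E_hom: "x \<in> LE \<Longrightarrow> NE (\<lambda>k. c * x k) = \<bar>c\<bar> * NE x"
  using sym unfolding symmetric_seq_space_def is_norm_on_def by blast
lemma E_tri: "x \<in> LE \<Longrightarrow> y \<in> LE \<Longrightarrow> NE (\<lambda>k. x k + y k) \<le> NE x + NE y"
  using sym unfolding symmetric_seq_space_def is_norm_on_def by blast
lemma E_complete: "complete_wrt LE NE" using sym unfolding symmetric_seq_space_def by blast
lemma E_sym: "x \<in> linf \<Longrightarrow> y \<in> LE \<Longrightarrow> (\<And>n. mu x n \<le> mu y n) \<Longrightarrow> x \<in> LE \<and> NE x \<le> NE y"
  using sym unfolding symmetric_seq_space_def by blast

lemma E_diff: "x \<in> LE \<Longrightarrow> y \<in> LE \<Longrightarrow> (\<lambda>k. x k - y k) \<in> LE"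
  using E_add[of x "\<lambda>k. -1 * y k"] E_scale[of y "-1"] by simp

lemma E_sub_c0: assumes "LE \<noteq> linf" "y \<in> LE" shows "y \<longlonglongrightarrow> 0"
proof (rule ccontr)
  assume nc: "\<not> y \<longlonglongrightarrow> 0"
  then obtain r where r: "r > 0" "\<forall>no. \<exists>n\<ge>no. \<not> norm (y n - 0) < r" unfolding LIMSEQ_iff by blast
  define K where "K = {k. r \<le> \<bar>y k\<bar>}"
  have "infinite K"
  proof
    assume "finite K"
    then obtain b where b: "\<forall>n\<in>K. n \<le> b" using finite_nat_set_iff_bounded_le by blast
    obtain n where "n \<ge> Suc b" "\<not> norm (y n - 0) < r" using r(2) by blast
    then have "n \<in> K" unfolding K_def by simp
    then show False using b \<open>n \<ge> Suc b\<close> by auto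
  qed
  have ly: "y \<in> linf" by (rule E_linf[OF assms(2)])
  have muy: "r \<le> mu y n" for n
  proof -
    obtain S where S: "finite S" "card S = Suc n" "S \<subseteq> K" using infinite_arbitrarily_large[OF \<open>infinite K\<close>] by blast
    show ?thesis by (rule mu_ge[OF ly S(1)]) (use S K_def in auto)
  qed
  have "linf \<subseteq> LE"
  proof
    fix z assume z: "z \<in> linf"
    obtain B where B: "B \<ge> 0" "\<forall>k. \<bar>z k\<bar> \<le> B" using linf_bound[OF z] by blast
    define w where "w = (\<lambda>k. (r / (B + 1)) * z k)"
    have wb: "\<forall>k. \<bar>w k\<bar> \<le> r"
    proof
      fix k
      have "\<bar>w k\<bar> = (r / (B + 1)) * \<bar>z k\<bar>" unfolding w_def using r B by (simp add: abs_mult)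
      also have "\<dots> \<le> (r / (B + 1)) * (B + 1)" using B(1) B(2)[rule_format, of k] r by (intro mult_left_mono) auto
      also have "\<dots> = r" using B by simp
      finally show "\<bar>w k\<bar> \<le> r" .
    qed
    have wl: "w \<in> linf" unfolding linf_def using wb by blast
    have "w \<in> LE" using E_sym[OF wl assms(2)] mu_le_bound[OF wb] r muy by (meson less_imp_le order_trans)
    then have "(\<lambda>k. ((B + 1) / r) * w k) \<in> LE" by (rule E_scale)
    moreover have "(\<lambda>k. ((B + 1) / r) * w k) = z"
    proof
      fix k have "B + 1 \<noteq> 0" using B by simp
      then show "((B + 1) / r) * w k = z k" unfolding w_def using r by simp
    qed
    ultimately show "z \<in> LE" by simp
  qed
  then show False using assms(1) E_linf by blast
qed

end

locale symE_nz = symE +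
  assumes nz: "\<exists>y\<in>LE. \<exists>j. y j \<noteq> 0"
begin

definition "phi n = NE (ind n)"
definition "Psi n = (\<Sum>i<n. 1 / (phi (Suc i))\<^sup>2)"

lemma ind1_in: "ind 1 \<in> LE"
proof -
  obtain y j where y: "y \<in> LE" "y j \<noteq> 0" using nz by blast
  define c where "c = \<bar>y j\<bar>"
  have c0: "c > 0" using y c_def by simp
  have "(\<lambda>i. c * ind 1 i) \<in> LE"
    using E_sym[OF ind_linf y(1) ind_le_mu[OF E_linf[OF y(1)], of "{j}" 1 c]] c_def by auto
  then have "(\<lambda>i. (1/c) * (c * ind 1 i)) \<in> LE" by (rule E_scale)
  then show ?thesis using c0 by (simp add: ind_def[abs_def])
qed

lemma gen_bound: assumes "finite S" "card S \<le> n" "\<forall>k. k \<notin> S \<longrightarrow> x k = 0" "\<forall>k. \<bar>x k\<bar> \<le> c" "0 \<le> c"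
  and indin: "ind n \<in> LE"
  shows "x \<in> LE \<and> NE x \<le> c * phi n"
proof -
  have xl: "x \<in> linf" unfolding linf_def using assms(4) by blast
  have cin: "(\<lambda>j. c * ind n j) \<in> LE" by (rule E_scale[OF indin])
  have "x \<in> LE \<and> NE x \<le> NE (\<lambda>j. c * ind n j)" by (rule E_sym[OF xl cin mu_le_ind[OF assms(1-5)]])
  then show ?thesis using E_hom[OF indin, of c] assms(5) phi_def by simp
qed

lemma unit_in: "(\<lambda>j. if j = k then 1 else 0) \<in> LE"
  using gen_bound[of "{k}" 1 "\<lambda>j. if j = k then 1 else 0" 1, OF _ _ _ _ _ ind1_in] by auto

lemma ind_in: "ind n \<in> LE"
proof (induction n)
  case 0
  have "ind 0 = (\<lambda>k. 0)" unfolding ind_def by simp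
  then show ?case using E_zero by simp
next
  case (Suc n)
  have "ind (Suc n) = (\<lambda>j. ind n j + (if j = n then 1 else 0))" unfolding ind_def by auto
  then show ?case using E_add[OF Suc unit_in] by simp
qed

lemma phi_nonneg: "0 \<le> phi n" unfolding phi_def using E_nonneg[OF ind_in] .

lemma phi_pos: assumes "n \<ge> 1" shows "phi n > 0"
proof -
  have "ind n 0 = 1" unfolding ind_def using assms by simp
  then have "ind n \<noteq> (\<lambda>k. 0)" by auto
  then have "phi n \<noteq> 0" unfolding phi_def using E_zero_iff[OF ind_in] by simp
  then show ?thesis using phi_nonneg[of n] by simp
qed

lemma phi_mono_Suc: "phi n \<le> phi (Suc n)"
proof -
  have "ind n \<in> LE \<and> NE (ind n) \<le> 1 * phi (Suc n)"
    by (rule gen_bound[of "{..<n}" "Suc n" "ind n" 1, OF _ _ _ _ _ ind_in]) (auto simp: ind_def)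
  then show ?thesis unfolding phi_def by simp
qed

lemma phi_mono: "i \<le> j \<Longrightarrow> phi i \<le> phi j"
  by (rule lift_Suc_mono_le[of phi, OF phi_mono_Suc])

lemma lower: assumes "y \<in> LE" "finite S" "card S = n" "\<forall>k\<in>S. c \<le> \<bar>y k\<bar>" "0 \<le> c"
  shows "c * phi n \<le> NE y"
proof -
  have "(\<lambda>j. c * ind n j) \<in> LE \<and> NE (\<lambda>j. c * ind n j) \<le> NE y"
    by (rule E_sym[OF ind_linf assms(1) ind_le_mu[OF E_linf[OF assms(1)] assms(2-5)]])
  then show ?thesis using E_hom[OF ind_in, of c n] assms(5) phi_def by simp
qed

lemma coord: assumes "v \<in> LE" shows "\<bar>v k\<bar> * phi 1 \<le> NE v"
  using lower[OF assms, of "{k}" 1 "\<bar>v k\<bar>"] by simp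

lemma sqs_bound: assumes "y \<in> LE" "finite S" shows "sqs y S \<le> (NE y)\<^sup>2 * Psi (card S)"
  using assms(2)
proof (induction "card S" arbitrary: S)
  case 0
  then show ?case by (simp add: sqs_def Psi_def)
next
  case (Suc j)
  then have ne: "S \<noteq> {}" by auto
  define c where "c = Min ((\<lambda>k. \<bar>y k\<bar>) ` S)"
  have "c \<in> (\<lambda>k. \<bar>y k\<bar>) ` S" unfolding c_def using ne Suc by simp
  then obtain k where k: "k \<in> S" "\<bar>y k\<bar> = c" by auto
  have cmin: "\<forall>k'\<in>S. c \<le> \<bar>y k'\<bar>" unfolding c_def using Suc by simp
  have c0: "0 \<le> c" using k by auto
  have "card (S - {k}) = j" using Suc k by simp
  then have IH: "sqs y (S - {k}) \<le> (NE y)\<^sup>2 * Psi j" using Suc.hyps(1)[of "S - {k}"] Suc.prems by simp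
  have "c * phi (Suc j) \<le> NE y" by (rule lower[OF assms(1) Suc.prems Suc.hyps(2)[symmetric] cmin c0])
  moreover have pp: "phi (Suc j) > 0" by (rule phi_pos) simp
  ultimately have "c \<le> NE y / phi (Suc j)" by (simp add: le_divide_eq)
  then have "c\<^sup>2 \<le> (NE y / phi (Suc j))\<^sup>2" using c0 by (intro power_mono) auto
  then have "\<bar>y k\<bar>\<^sup>2 \<le> (NE y)\<^sup>2 * (1 / (phi (Suc j))\<^sup>2)" using k by (simp add: power_divide)
  then have ck: "(y k)\<^sup>2 \<le> (NE y)\<^sup>2 * (1 / (phi (Suc j))\<^sup>2)" by simp
  have "sqs y S = (y k)\<^sup>2 + sqs y (S - {k})" unfolding sqs_def using Suc k by (simp add: sum.remove)
  also have "\<dots> \<le> (NE y)\<^sup>2 * (1 / (phi (Suc j))\<^sup>2) + (NE y)\<^sup>2 * Psi j" using ck IH by simp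
  also have "\<dots> = (NE y)\<^sup>2 * Psi (Suc j)" unfolding Psi_def by (simp add: distrib_left)
  finally show ?case using Suc.hyps(2) by simp
qed

end

context symE_nz begin

lemma phi_unbounded: assumes "LE \<noteq> c0" "LE \<noteq> linf" shows "\<exists>n. B < phi n"
proof (rule ccontr)
  assume "\<not> ?thesis"
  then have pB: "phi n \<le> B" for n by (simp add: not_less)
  define B0 where "B0 = max B 0"
  have B0: "B0 \<ge> 0" "\<And>n. phi n \<le> B0" unfolding B0_def using pB by (auto intro: max.coboundedI1)
  have p1: "phi 1 > 0" by (rule phi_pos) simp
  have "c0 \<subseteq> LE"
  proof
    fix z assume "z \<in> c0"
    then have zc: "z \<longlonglongrightarrow> 0" unfolding c0_def by simp
    obtain Kz where Kz: "Kz > 0" "\<forall>n. norm (z n) \<le> Kz" using convergent_imp_Bseq[OF convergentI[OF zc]] unfolding Bseq_def by blast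
    define X where "X n = trunc n z" for n
    have XL: "X n \<in> LE" for n
      using gen_bound[of "{..<n}" n "X n" Kz, OF _ _ _ _ _ ind_in] Kz unfolding X_def trunc_def by auto
    have cauchy: "\<forall>e>0. \<exists>M. \<forall>m\<ge>M. \<forall>n\<ge>M. NE (\<lambda>k. X m k - X n k) < e"
    proof (intro allI impI)
      fix e :: real assume e: "e > 0"
      define \<beta> where "\<beta> = e / (2 * (B0 + 1))"
      have \<beta>0: "\<beta> > 0" unfolding \<beta>_def using e B0 by simp
      obtain N where N: "\<forall>k\<ge>N. norm (z k - 0) < \<beta>" using zc \<beta>0 unfolding LIMSEQ_iff by blast
      have "NE (\<lambda>k. X m k - X n k) < e" if "m \<ge> N" "n \<ge> N" for m n
      proof -
        have db: "\<forall>k. \<bar>X m k - X n k\<bar> \<le> \<beta>"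
        proof
          fix k show "\<bar>X m k - X n k\<bar> \<le> \<beta>"
          proof (cases "k < min m n")
            case True then show ?thesis using \<beta>0 unfolding X_def trunc_def by simp
          next
            case False
            moreover have "min m n \<ge> N" using that by simp
            ultimately have "k \<ge> N" by linarith
            then have "\<bar>z k\<bar> < \<beta>" using N by simp
            then show ?thesis using \<beta>0 unfolding X_def trunc_def by auto
          qed
        qed
        have "NE (\<lambda>k. X m k - X n k) \<le> \<beta> * phi (max m n)"
          using gen_bound[of "{..<max m n}" "max m n" "\<lambda>k. X m k - X n k" \<beta>, OF _ _ _ db _ ind_in] \<beta>0
          unfolding X_def trunc_def by auto
        also have "\<dots> \<le> \<beta> * B0" using B0 \<beta>0 by (intro mult_left_mono) auto
        also have "\<dots> \<le> \<beta> * (B0 + 1)" using \<beta>0 by simp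
        also have "\<dots> = e / 2" unfolding \<beta>_def using B0 by (simp add: field_simps)
        also have "\<dots> < e" using e by simp
        finally show ?thesis .
      qed
      then show "\<exists>M. \<forall>m\<ge>M. \<forall>n\<ge>M. NE (\<lambda>k. X m k - X n k) < e" by blast
    qed
    obtain u where u: "u \<in> LE" "(\<lambda>n. NE (\<lambda>k. X n k - u k)) \<longlonglongrightarrow> 0"
      using E_complete XL cauchy unfolding complete_wrt_def by blast
    have "z k = u k" for k
    proof (rule ccontr)
      assume "z k \<noteq> u k"
      then have d0: "\<bar>z k - u k\<bar> * phi 1 > 0" using p1 by simp
      obtain N where N: "\<forall>n\<ge>N. norm (NE (\<lambda>k. X n k - u k) - 0) < \<bar>z k - u k\<bar> * phi 1"
        using u(2) d0 unfolding LIMSEQ_iff by blast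
      define n where "n = max N (Suc k)"
      have c1: "\<bar>X n k - u k\<bar> * phi 1 \<le> NE (\<lambda>k. X n k - u k)" by (rule coord[OF E_diff[OF XL u(1)]])
      have "k < n" unfolding n_def by simp
      then have c2: "X n k = z k" unfolding X_def trunc_def by simp
      have "n \<ge> N" unfolding n_def by simp
      then have "norm (NE (\<lambda>k. X n k - u k) - 0) < \<bar>z k - u k\<bar> * phi 1" using N by blast
      then have c3: "NE (\<lambda>k. X n k - u k) < \<bar>z k - u k\<bar> * phi 1" by simp
      show False using c1 c2 c3 by simp
    qed
    then have "z = u" by auto
    then show "z \<in> LE" using u by simp
  qed
  moreover have "LE \<subseteq> c0" unfolding c0_def using E_sub_c0[OF assms(2)] by blast
  ultimately show False using assms(1) by blast
qed

lemma Psi_mono: "i \<le> j \<Longrightarrow> Psi i \<le> Psi j"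
  unfolding Psi_def by (intro sum_mono2) auto

lemma Psi_small: assumes "LE \<noteq> c0" "LE \<noteq> linf" "\<epsilon> > 0" shows "\<exists>M. \<forall>n\<ge>M. Psi n \<le> \<epsilon> * real n"
proof -
  define K where "K = sqrt (2 / \<epsilon>)"
  have K0: "K > 0" unfolding K_def using assms by simp
  obtain I0 where I0: "K < phi I0" using phi_unbounded[OF assms(1,2)] by blast
  have trm: "1 / (phi (Suc i))\<^sup>2 \<le> \<epsilon> / 2" if "i \<ge> I0" for i
  proof -
    have "K \<le> phi (Suc i)" using I0 phi_mono[of I0 "Suc i"] that by simp
    then have "K\<^sup>2 \<le> (phi (Suc i))\<^sup>2" using K0 by (intro power_mono) auto
    moreover have "K\<^sup>2 = 2 / \<epsilon>" unfolding K_def using assms by simp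
    ultimately have "2 / \<epsilon> \<le> (phi (Suc i))\<^sup>2" by simp
    moreover have pp: "(phi (Suc i))\<^sup>2 > 0" using \<open>K \<le> phi (Suc i)\<close> K0 by simp
    ultimately have "2 \<le> \<epsilon> * (phi (Suc i))\<^sup>2" using assms(3) by (simp add: divide_le_eq mult.commute)
    then show ?thesis using pp assms(3) by (simp add: divide_le_eq pos_le_divide_eq mult.commute)
  qed
  have lin: "Psi n \<le> Psi I0 + real (n - I0) * (\<epsilon> / 2)" if "n \<ge> I0" for n
    using that
  proof (induction n rule: dec_induct)
    case base
    then show ?case by simp
  next
    case (step n)
    have "Psi (Suc n) = Psi n + 1 / (phi (Suc n))\<^sup>2" unfolding Psi_def by simp
    also have "\<dots> \<le> Psi I0 + real (n - I0) * (\<epsilon> / 2) + \<epsilon> / 2" using step trm[OF step(1)] by simp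
    also have "\<dots> = Psi I0 + real (Suc n - I0) * (\<epsilon> / 2)" using step(1) by (simp add: Suc_diff_le distrib_right)
    finally show ?case .
  qed
  define M where "M = max I0 (nat \<lceil>2 * Psi I0 / \<epsilon>\<rceil>)"
  have "Psi n \<le> \<epsilon> * real n" if "n \<ge> M" for n
  proof -
    have nI: "n \<ge> I0" using that M_def by simp
    have "2 * Psi I0 / \<epsilon> \<le> real n" using that M_def by linarith
    then have P: "Psi I0 \<le> real n * (\<epsilon> / 2)" using assms(3) by (simp add: field_simps)
    have "real (n - I0) \<le> real n" by simp
    then have Q: "real (n - I0) * (\<epsilon> / 2) \<le> real n * (\<epsilon> / 2)" using assms(3) by (intro mult_right_mono) auto
    have "Psi n \<le> real n * (\<epsilon> / 2) + real n * (\<epsilon> / 2)" using lin[OF nI] P Q by linarith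
    then show ?thesis by (simp add: algebra_simps)
  qed
  then show ?thesis by blast
qed

lemma choose_m: assumes "LE \<noteq> c0" "LE \<noteq> linf"
  shows "\<exists>m. (\<forall>t. 1 \<le> m t) \<and> summable (\<lambda>t. 1 / real (m t)) \<and> LE \<subseteq> LFs m"
proof -
  have "\<forall>t. \<exists>M. \<forall>n\<ge>M. Psi n \<le> (1/2)^t * real n"
    using Psi_small[OF assms] by simp
  then obtain Mf where Mf: "\<And>t. \<forall>n\<ge>Mf t. Psi n \<le> (1/2)^t * real n" by metis
  define m where "m t = max (Mf t) (2^t)" for t
  have m1: "1 \<le> m t" for t unfolding m_def by (simp add: le_max_iff_disj)
  have mge: "(2::real)^t \<le> real (m t)" for t unfolding m_def
    by (metis le_max_iff_disj of_nat_le_iff of_nat_numeral of_nat_power order_refl)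
  have inv: "1 / real (m t) \<le> (1/2)^t" for t
  proof -
    have "1 / real (m t) \<le> 1 / (2::real)^t" using mge[of t] m1[of t] by (intro divide_left_mono) auto
    then show ?thesis by (simp add: power_one_over)
  qed
  have geo: "summable (\<lambda>t. (1/2::real)^t)" by simp
  have msum: "summable (\<lambda>t. 1 / real (m t))"
    by (rule summable_comparison_test'[where N=0, OF geo]) (use inv in simp)
  interpret wt m by standard (rule m1)
  have Psim: "Psi (m t) \<le> (1/2)^t * real (m t)" for t using Mf[of t] unfolding m_def by simp
  have "LE \<subseteq> LFs m"
  proof
    fix y assume y: "y \<in> LE"
    have yl: "y \<in> linf" by (rule E_linf[OF y])
    have tb: "\<tau> t y \<le> (NE y)\<^sup>2 * (1/2)^t" for t
    proof (rule tau_least)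
      fix S :: "nat set" assume S: "finite S" "card S \<le> m t"
      have "sqs y S \<le> (NE y)\<^sup>2 * Psi (card S)" by (rule sqs_bound[OF y S(1)])
      also have "\<dots> \<le> (NE y)\<^sup>2 * Psi (m t)" using Psi_mono[OF S(2)] by (intro mult_left_mono) auto
      also have "\<dots> \<le> (NE y)\<^sup>2 * ((1/2)^t * real (m t))" using Psim by (intro mult_left_mono) auto
      finally have "sqs y S \<le> ((NE y)\<^sup>2 * (1/2)^t) * real (m t)" by (simp add: mult.assoc)
      then show "sqs y S / real (m t) \<le> (NE y)\<^sup>2 * (1/2)^t" using m1[of t] by (simp add: divide_le_eq)
    qed
    have "summable (\<lambda>t. \<tau> t y)"
      by (rule summable_comparison_test'[where N=0, OF summable_mult[OF geo, of "(NE y)\<^sup>2"]])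
         (use tb tau_nonneg[OF yl] in simp)
    then show "y \<in> LFs m" unfolding LFs_def using yl by simp
  qed
  then show ?thesis using m1 msum by blast
qed

end

theorem corollary3p2:
  fixes LE :: "seq set" and NE :: "seq \<Rightarrow> real"
  assumes "symmetric_seq_space LE NE"
    and "LE \<noteq> c0" and "LE \<noteq> linf"
  shows "\<exists>LF NF. symmetric_seq_space LF NF \<and> reflexive_space LF NF \<and> LE \<subseteq> LF"
proof (cases "\<exists>y\<in>LE. \<exists>j. y j \<noteq> 0")
  case True
  interpret symE_nz LE NE by standard (use assms(1) True in auto)
  obtain m where m: "\<forall>t. 1 \<le> m t" "summable (\<lambda>t. 1 / real (m t))" "LE \<subseteq> LFs m"
    using choose_m[OF assms(2,3)] by blast
  interpret wts m by standard (use m in auto)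
  show ?thesis using LF_symmetric LF_reflexive m(3) by blast
next
  case False
  define m :: "nat \<Rightarrow> nat" where "m t = 2^t" for t
  have geo: "summable (\<lambda>t. (1/2::real)^t)" by simp
  have eq: "(\<lambda>t. 1 / real (m t)) = (\<lambda>t. (1/2::real)^t)" unfolding m_def by (simp add: power_one_over)
  have ms: "summable (\<lambda>t. 1 / real (m t))" using geo unfolding eq .
  interpret wts m
  proof
    show "1 \<le> m t" for t unfolding m_def by simp
    show "summable (\<lambda>t. 1 / real (m t))" by (rule ms)
  qed
  have "LE \<subseteq> LFs m"
  proof
    fix y assume "y \<in> LE"
    then have "y = (\<lambda>k. 0)" using False by auto
    then show "y \<in> LFs m" using LF_zero by simp
  qed
  then show ?thesis using LF_symmetric LF_reflexive by blast
qed


end
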